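(* In the twisted Heisenberg category $\mathcal{H}^t$ (defined in the context), for $n\ge 2$ the following relations hold in the algebra $\mathrm{End}(P^n)$, for all admissible $i,j$: $T_iX_i = X_{i+1}T_i + 1 + C_iC_{i+1}$, $\;X_iT_i = T_iX_{i+1} + 1 - C_iC_{i+1}$, $\;C_iX_j = (-1)^{\delta_{i,j}}X_jC_i$, $\;X_iX_j = X_jX_i$.
   Context: $\Bbbk$ is a field of characteristic $0$. $\mathcal{H}^t$ is the $\Bbbk$-linear $\mathbb{Z}/2\mathbb{Z}$-graded (super) monoidal category obtained as the idempotent completion (with finite direct sums and parity shifts) of the monoidal category generated by objects $P, Q$ (unit object $\mathbf 1$) and morphisms: an even upward crossing $s: PP\to PP$; even cups/caps $\eta:\mathbf 1\to QP$, $\varepsilon: QP\to\mathbf 1$, $\eta':\mathbf 1\to PQ$, $\varepsilon':PQ\to\mathbf 1$; and odd "hollow dots" $c_P:P\to P\{1\}$, $c_Q:Q\to Q\{1\}$. Morphisms are planar string diagrams ($P$ upward strand, $Q$ downward strand, composition read bottom to top); diagrams differing by planar isotopy are equal, and odd dots on different strands supercommute (interchanging heights of two dots on different strands gives a sign $-1$). Let $\sigma=(\varepsilon\otimes 1_{PQ})(1_Q\otimes s\otimes 1_Q)(1_{QP}\otimes\eta'):QP\to PQ$ and $\sigma'=(1_{QP}\otimes\varepsilon')(1_Q\otimes s\otimes 1_Q)(\eta\otimes 1_{PQ}):PQ\to QP$. Defining relations: $s^2=1$, braid relation for $s$ on $PPP$; $\sigma\sigma'=1_{PQ}$, $\sigma'\sigma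 = 1_{QP}-\eta\varepsilon-(c_Q\otimes 1_P)\eta\varepsilon(1_Q\otimes c_P)$; $\varepsilon\eta=1_{\mathbf 1}$, $(\varepsilon\otimes 1_P)(1_Q\otimes s)(\eta\otimes 1_P)=0$; $s(c_P\otimes 1)=(1\otimes c_P)s$, $(c_P\otimes 1)s=s(1\otimes c_P)$; $\varepsilon(c_Q\otimes 1_P)=-\varepsilon(1_Q\otimes c_P)$, $\varepsilon'(c_P\otimes 1_Q)=\varepsilon'(1_P\otimes c_Q)$, $(c_Q\otimes 1_P)\eta=(1_Q\otimes c_P)\eta$, $(c_P\otimes 1_Q)\eta'=-(1_P\otimes c_Q)\eta'$; $c_P^2=1_P$, $c_Q^2=-1_Q$, $\varepsilon(1_Q\otimes c_P)\eta=0$. In $\mathrm{End}(P^n)$ (product = composition), $T_i$ is the crossing $s$ applied to strands $i,i+1$ ($1\le i\le n-1$), $C_i$ is $c_P$ on strand $i$, and $X_i$ is the "right curl" $X=(1_P\otimes\varepsilon')(s\otimes 1_Q)(1_P\otimes\eta'):P\to P$ applied to strand $i$ ($1\le i\le n$); $1$ is the identity of $P^n$ and $\delta_{i,j}$ is the Kronecker delta. *)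

theory Defs
  imports Main
begin

text \<open>Objects of the (non-completed) monoidal supercategory are words in P, Q,
  encoded as bool lists: True = P (upward strand), False = Q (downward strand).
  A k-linear strict monoidal supercategory is encoded by the following data:
  Hom spaces (as subsets of an ambient type 'm), parity-homogeneous subspaces,
  composition (sc_comp g f = g after f), tensor product, identities, linear structure.\<close>

abbreviation Pob :: bool where "Pob \<equiv> True"
abbreviation Qob :: bool where "Qob \<equiv> False"

record ('k, 'm) scat =
  sc_hom   :: "bool list \<Rightarrow> bool list \<Rightarrow> 'm set"
  sc_par   :: "bool \<Rightarrow> bool list \<Rightarrow> bool list \<Rightarrow> 'm set"
  sc_comp  :: "'m \<Rightarrow> 'm \<Rightarrow> 'm"
  sc_tens  :: "'m \<Rightarrow> 'm \<Rightarrow> 'm"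
  sc_id    :: "bool list \<Rightarrow> 'm"
  sc_add   :: "'m \<Rightarrow> 'm \<Rightarrow> 'm"
  sc_smult :: "'k \<Rightarrow> 'm \<Rightarrow> 'm"
  sc_zero  :: "bool list \<Rightarrow> bool list \<Rightarrow> 'm"

text \<open>Axioms of a strict monoidal k-linear supercategory (sc_par False = even,
  sc_par True = odd), including the super interchange law.\<close>

definition smcat :: "('k::field, 'm) scat \<Rightarrow> bool" where
"smcat C \<longleftrightarrow>
  (let H = sc_hom C; Pr = sc_par C; cmp = sc_comp C; tns = sc_tens C; idm = sc_id C;
       add = sc_add C; scl = sc_smult C; zer = sc_zero C in
   (\<forall>a b.
      zer a b \<in> H a b \<and>
      (\<forall>f\<in>H a b. \<forall>g\<in>H a b. add f g \<in> H a b) \<and>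
      (\<forall>c. \<forall>f\<in>H a b. scl c f \<in> H a b) \<and>
      (\<forall>f\<in>H a b. \<forall>g\<in>H a b. \<forall>h\<in>H a b. add (add f g) h = add f (add g h)) \<and>
      (\<forall>f\<in>H a b. \<forall>g\<in>H a b. add f g = add g f) \<and>
      (\<forall>f\<in>H a b. add (zer a b) f = f) \<and>
      (\<forall>f\<in>H a b. add f (scl (-1) f) = zer a b) \<and>
      (\<forall>f\<in>H a b. scl 1 f = f) \<and>
      (\<forall>c d. \<forall>f\<in>H a b. scl c (scl d f) = scl (c * d) f) \<and>
      (\<forall>c d. \<forall>f\<in>H a b. scl (c + d) f = add (scl c f) (scl d f)) \<and>
      (\<forall>c. \<forall>f\<in>H a b. \<forall>g\<in>H a b. scl c (add f g) = add (scl c f) (scl c g)) \<and>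
      (\<forall>p. Pr p a b \<subseteq> H a b \<and> zer a b \<in> Pr p a b \<and>
           (\<forall>f\<in>Pr p a b. \<forall>g\<in>Pr p a b. add f g \<in> Pr p a b) \<and>
           (\<forall>c. \<forall>f\<in>Pr p a b. scl c f \<in> Pr p a b)) \<and>
      (\<forall>f\<in>H a b. \<exists>g\<in>Pr False a b. \<exists>h\<in>Pr True a b. f = add g h)) \<and>
   (\<forall>a. idm a \<in> Pr False a a) \<and>
   (\<forall>a b c. \<forall>f\<in>H a b. \<forall>g\<in>H b c. cmp g f \<in> H a c) \<and>
   (\<forall>a b c p q. \<forall>f\<in>Pr p a b. \<forall>g\<in>Pr q b c. cmp g f \<in> Pr (p \<noteq> q) a c) \<and>
   (\<forall>a b c d. \<forall>f\<in>H a b. \<forall>g\<in>H b c. \<forall>h\<in>H c d. cmp h (cmp g f) = cmp (cmp h g) f) \<and>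
   (\<forall>a b. \<forall>f\<in>H a b. cmp (idm b) f = f \<and> cmp f (idm a) = f) \<and>
   (\<forall>a b c. \<forall>f\<in>H a b. \<forall>f'\<in>H a b. \<forall>g\<in>H b c. cmp g (add f f') = add (cmp g f) (cmp g f')) \<and>
   (\<forall>a b c. \<forall>f\<in>H a b. \<forall>g\<in>H b c. \<forall>g'\<in>H b c. cmp (add g g') f = add (cmp g f) (cmp g' f)) \<and>
   (\<forall>a b c k. \<forall>f\<in>H a b. \<forall>g\<in>H b c.
       cmp g (scl k f) = scl k (cmp g f) \<and> cmp (scl k g) f = scl k (cmp g f)) \<and>
   (\<forall>a b c d. \<forall>f\<in>H a b. \<forall>g\<in>H c d. tns f g \<in> H (a @ c) (b @ d)) \<and>
   (\<forall>a b c d p q. \<forall>f\<in>Pr p a b. \<forall>g\<in>Pr q c d. tns f g \<in> Pr (p \<noteq> q) (a @ c) (b @ d)) \<and>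
   (\<forall>a b c d e h. \<forall>f\<in>H a b. \<forall>g\<in>H c d. \<forall>k\<in>H e h. tns (tns f g) k = tns f (tns g k)) \<and>
   (\<forall>a b. \<forall>f\<in>H a b. tns (idm []) f = f \<and> tns f (idm []) = f) \<and>
   (\<forall>a b. tns (idm a) (idm b) = idm (a @ b)) \<and>
   (\<forall>a b c d. \<forall>f\<in>H a b. \<forall>f'\<in>H a b. \<forall>g\<in>H c d. tns (add f f') g = add (tns f g) (tns f' g)) \<and>
   (\<forall>a b c d. \<forall>f\<in>H a b. \<forall>g\<in>H c d. \<forall>g'\<in>H c d. tns f (add g g') = add (tns f g) (tns f g')) \<and>
   (\<forall>a b c d k. \<forall>f\<in>H a b. \<forall>g\<in>H c d.
       tns (scl k f) g = scl k (tns f g) \<and> tns f (scl k g) = scl k (tns f g)) \<and>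
   (\<forall>a b a' c d d' p q p' q'. \<forall>f\<in>Pr p a b. \<forall>g\<in>Pr q c d. \<forall>f'\<in>Pr p' b a'. \<forall>g'\<in>Pr q' d d'.
       cmp (tns f' g') (tns f g) = scl (if q' \<and> p then -1 else 1) (tns (cmp f' f) (cmp g' g))))"

record 'm thgen =
  g_s    :: 'm   \<comment> \<open>upward crossing PP -> PP\<close>
  g_eta  :: 'm
  g_eps  :: 'm
  g_eta2 :: 'm
  g_eps2 :: 'm
  g_cP   :: 'm
  g_cQ   :: 'm

definition th_sigma :: "('k::field, 'm) scat \<Rightarrow> 'm thgen \<Rightarrow> 'm" where
"th_sigma C G = sc_comp C (sc_tens C (g_eps G) (sc_id C [Pob, Qob]))
   (sc_comp C (sc_tens C (sc_tens C (sc_id C [Qob]) (g_s G)) (sc_id C [Qob]))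
      (sc_tens C (sc_id C [Qob, Pob]) (g_eta2 G)))"

definition th_sigma' :: "('k::field, 'm) scat \<Rightarrow> 'm thgen \<Rightarrow> 'm" where
"th_sigma' C G = sc_comp C (sc_tens C (sc_id C [Qob, Pob]) (g_eps2 G))
   (sc_comp C (sc_tens C (sc_tens C (sc_id C [Qob]) (g_s G)) (sc_id C [Qob]))
      (sc_tens C (g_eta G) (sc_id C [Pob, Qob])))"

definition th_X :: "('k::field, 'm) scat \<Rightarrow> 'm thgen \<Rightarrow> 'm" where
"th_X C G = sc_comp C (sc_tens C (sc_id C [Pob]) (g_eps2 G))
   (sc_comp C (sc_tens C (g_s G) (sc_id C [Qob]))
      (sc_tens C (sc_id C [Pob]) (g_eta2 G)))"

definition th_rel :: "('k::field, 'm) scat \<Rightarrow> 'm thgen \<Rightarrow> bool" where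
"th_rel C G \<longleftrightarrow>
  (let Pr = sc_par C; cmp = sc_comp C; tns = sc_tens C; idm = sc_id C;
       add = sc_add C; scl = sc_smult C; zer = sc_zero C;
       s = g_s G; eta = g_eta G; eps = g_eps G; eta2 = g_eta2 G; eps2 = g_eps2 G;
       cP = g_cP G; cQ = g_cQ G;
       P = Pob; Q = Qob;
       neg = scl (-1);
       sig = th_sigma C G; sig' = th_sigma' C G in
   \<comment> \<open>types and parities of generators\<close>
   s \<in> Pr False [P,P] [P,P] \<and>
   eta \<in> Pr False [] [Q,P] \<and> eps \<in> Pr False [Q,P] [] \<and>
   eta2 \<in> Pr False [] [P,Q] \<and> eps2 \<in> Pr False [P,Q] [] \<and>
   cP \<in> Pr True [P] [P] \<and> cQ \<in> Pr True [Q] [Q] \<and>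
   \<comment> \<open>planar isotopy: zigzag identities\<close>
   cmp (tns (idm [Q]) eps2) (tns eta (idm [Q])) = idm [Q] \<and>
   cmp (tns eps2 (idm [P])) (tns (idm [P]) eta) = idm [P] \<and>
   cmp (tns (idm [P]) eps) (tns eta2 (idm [P])) = idm [P] \<and>
   cmp (tns eps (idm [Q])) (tns (idm [Q]) eta2) = idm [Q] \<and>
   \<comment> \<open>planar isotopy: the two 180-degree rotations of the crossing agree\<close>
   cmp (tns (cmp eps (tns (tns (idm [Q]) eps) (idm [P]))) (idm [Q,Q]))
       (cmp (tns (tns (idm [Q,Q]) s) (idm [Q,Q]))
            (tns (idm [Q,Q]) (cmp (tns (tns (idm [P]) eta2) (idm [Q])) eta2)))
   = cmp (tns (idm [Q,Q]) (cmp eps2 (tns (tns (idm [P]) eps2) (idm [Q]))))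
       (cmp (tns (tns (idm [Q,Q]) s) (idm [Q,Q]))
            (tns (cmp (tns (tns (idm [Q]) eta) (idm [P])) eta) (idm [Q,Q]))) \<and>
   \<comment> \<open>defining relations\<close>
   cmp s s = idm [P,P] \<and>
   cmp (tns s (idm [P])) (cmp (tns (idm [P]) s) (tns s (idm [P])))
     = cmp (tns (idm [P]) s) (cmp (tns s (idm [P])) (tns (idm [P]) s)) \<and>
   cmp sig sig' = idm [P,Q] \<and>
   cmp sig' sig = add (add (idm [Q,P]) (neg (cmp eta eps)))
                      (neg (cmp (tns cQ (idm [P])) (cmp eta (cmp eps (tns (idm [Q]) cP))))) \<and>
   cmp eps eta = idm [] \<and>
   cmp (tns eps (idm [P])) (cmp (tns (idm [Q]) s) (tns eta (idm [P]))) = zer [P] [P] \<and>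
   cmp s (tns cP (idm [P])) = cmp (tns (idm [P]) cP) s \<and>
   cmp (tns cP (idm [P])) s = cmp s (tns (idm [P]) cP) \<and>
   cmp eps (tns cQ (idm [P])) = neg (cmp eps (tns (idm [Q]) cP)) \<and>
   cmp eps2 (tns cP (idm [Q])) = cmp eps2 (tns (idm [P]) cQ) \<and>
   cmp (tns cQ (idm [P])) eta = cmp (tns (idm [Q]) cP) eta \<and>
   cmp (tns cP (idm [Q])) eta2 = neg (cmp (tns (idm [P]) cQ) eta2) \<and>
   cmp cP cP = idm [P] \<and>
   cmp cQ cQ = neg (idm [Q]) \<and>
   cmp eps (cmp (tns (idm [Q]) cP) eta) = zer [] [])"

text \<open>Elements of End(P^n), strands numbered 1..n from the left.\<close>

definition th_T :: "('k::field, 'm) scat \<Rightarrow> 'm thgen \<Rightarrow> nat \<Rightarrow> nat \<Rightarrow> 'm" where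
"th_T C G n i = sc_tens C (sc_tens C (sc_id C (replicate (i - 1) Pob)) (g_s G))
                          (sc_id C (replicate (n - i - 1) Pob))"

definition th_C :: "('k::field, 'm) scat \<Rightarrow> 'm thgen \<Rightarrow> nat \<Rightarrow> nat \<Rightarrow> 'm" where
"th_C C G n i = sc_tens C (sc_tens C (sc_id C (replicate (i - 1) Pob)) (g_cP G))
                          (sc_id C (replicate (n - i) Pob))"

definition th_Xi :: "('k::field, 'm) scat \<Rightarrow> 'm thgen \<Rightarrow> nat \<Rightarrow> nat \<Rightarrow> 'm" where
"th_Xi C G n i = sc_tens C (sc_tens C (sc_id C (replicate (i - 1) Pob)) (th_X C G))
                          (sc_id C (replicate (n - i) Pob))"

end

theory Submission
  imports Defs
begin

locale TH =
  fixes C :: "('k::field_char_0, 'm) scat" and G :: "'m thgen"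
  assumes smc: "smcat C" and rl: "th_rel C G"
begin

abbreviation Hm where "Hm \<equiv> sc_hom C"
abbreviation Pr where "Pr \<equiv> sc_par C"
abbreviation cm (infixr "\<odot>" 70) where "g \<odot> f \<equiv> sc_comp C g f"
abbreviation tn (infixl "\<otimes>" 75) where "f \<otimes> g \<equiv> sc_tens C f g"
abbreviation idm where "idm \<equiv> sc_id C"
abbreviation ad (infixl "\<oplus>" 65) where "f \<oplus> g \<equiv> sc_add C f g"
abbreviation sm where "sm \<equiv> sc_smult C"
abbreviation zr where "zr \<equiv> sc_zero C"

lemma A: "(\<forall>a b.
      zr a b \<in> Hm a b \<and>
      (\<forall>f\<in>Hm a b. \<forall>g\<in>Hm a b. f \<oplus> g \<in> Hm a b) \<and>
      (\<forall>c. \<forall>f\<in>Hm a b. sm c f \<in> Hm a b) \<and>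
      (\<forall>f\<in>Hm a b. \<forall>g\<in>Hm a b. \<forall>h\<in>Hm a b. (f \<oplus> g) \<oplus> h = f \<oplus> (g \<oplus> h)) \<and>
      (\<forall>f\<in>Hm a b. \<forall>g\<in>Hm a b. f \<oplus> g = g \<oplus> f) \<and>
      (\<forall>f\<in>Hm a b. zr a b \<oplus> f = f) \<and>
      (\<forall>f\<in>Hm a b. f \<oplus> (sm (-1) f) = zr a b) \<and>
      (\<forall>f\<in>Hm a b. sm 1 f = f) \<and>
      (\<forall>c d. \<forall>f\<in>Hm a b. sm c (sm d f) = sm (c * d) f) \<and>
      (\<forall>c d. \<forall>f\<in>Hm a b. sm (c + d) f = sm c f \<oplus> sm d f) \<and>
      (\<forall>c. \<forall>f\<in>Hm a b. \<forall>g\<in>Hm a b. sm c (f \<oplus> g) = sm c f \<oplus> sm c g) \<and>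
      (\<forall>p. Pr p a b \<subseteq> Hm a b \<and> zr a b \<in> Pr p a b \<and>
           (\<forall>f\<in>Pr p a b. \<forall>g\<in>Pr p a b. f \<oplus> g \<in> Pr p a b) \<and>
           (\<forall>c. \<forall>f\<in>Pr p a b. sm c f \<in> Pr p a b)) \<and>
      (\<forall>f\<in>Hm a b. \<exists>g\<in>Pr False a b. \<exists>h\<in>Pr True a b. f = g \<oplus> h)) \<and>
   (\<forall>a. idm a \<in> Pr False a a) \<and>
   (\<forall>a b c. \<forall>f\<in>Hm a b. \<forall>g\<in>Hm b c. g \<odot> f \<in> Hm a c) \<and>
   (\<forall>a b c p q. \<forall>f\<in>Pr p a b. \<forall>g\<in>Pr q b c. g \<odot> f \<in> Pr (p \<noteq> q) a c) \<and>
   (\<forall>a b c d. \<forall>f\<in>Hm a b. \<forall>g\<in>Hm b c. \<forall>h\<in>Hm c d. h \<odot> (g \<odot> f) = (h \<odot> g) \<odot> f) \<and>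
   (\<forall>a b. \<forall>f\<in>Hm a b. idm b \<odot> f = f \<and> f \<odot> idm a = f) \<and>
   (\<forall>a b c. \<forall>f\<in>Hm a b. \<forall>f'\<in>Hm a b. \<forall>g\<in>Hm b c. g \<odot> (f \<oplus> f') = (g \<odot> f) \<oplus> (g \<odot> f')) \<and>
   (\<forall>a b c. \<forall>f\<in>Hm a b. \<forall>g\<in>Hm b c. \<forall>g'\<in>Hm b c. (g \<oplus> g') \<odot> f = (g \<odot> f) \<oplus> (g' \<odot> f)) \<and>
   (\<forall>a b c k. \<forall>f\<in>Hm a b. \<forall>g\<in>Hm b c.
       g \<odot> (sm k f) = sm k (g \<odot> f) \<and> (sm k g) \<odot> f = sm k (g \<odot> f)) \<and>
   (\<forall>a b c d. \<forall>f\<in>Hm a b. \<forall>g\<in>Hm c d. f \<otimes> g \<in> Hm (a @ c) (b @ d)) \<and>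
   (\<forall>a b c d p q. \<forall>f\<in>Pr p a b. \<forall>g\<in>Pr q c d. f \<otimes> g \<in> Pr (p \<noteq> q) (a @ c) (b @ d)) \<and>
   (\<forall>a b c d e h. \<forall>f\<in>Hm a b. \<forall>g\<in>Hm c d. \<forall>k\<in>Hm e h. (f \<otimes> g) \<otimes> k = f \<otimes> (g \<otimes> k)) \<and>
   (\<forall>a b. \<forall>f\<in>Hm a b. idm [] \<otimes> f = f \<and> f \<otimes> idm [] = f) \<and>
   (\<forall>a b. idm a \<otimes> idm b = idm (a @ b)) \<and>
   (\<forall>a b c d. \<forall>f\<in>Hm a b. \<forall>f'\<in>Hm a b. \<forall>g\<in>Hm c d. (f \<oplus> f') \<otimes> g = (f \<otimes> g) \<oplus> (f' \<otimes> g)) \<and>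
   (\<forall>a b c d. \<forall>f\<in>Hm a b. \<forall>g\<in>Hm c d. \<forall>g'\<in>Hm c d. f \<otimes> (g \<oplus> g') = (f \<otimes> g) \<oplus> (f \<otimes> g')) \<and>
   (\<forall>a b c d k. \<forall>f\<in>Hm a b. \<forall>g\<in>Hm c d.
       (sm k f) \<otimes> g = sm k (f \<otimes> g) \<and> f \<otimes> (sm k g) = sm k (f \<otimes> g)) \<and>
   (\<forall>a b a' c d d' p q p' q'. \<forall>f\<in>Pr p a b. \<forall>g\<in>Pr q c d. \<forall>f'\<in>Pr p' b a'. \<forall>g'\<in>Pr q' d d'.
       (f' \<otimes> g') \<odot> (f \<otimes> g) = sm (if q' \<and> p then -1 else 1) ((f' \<odot> f) \<otimes> (g' \<odot> g)))"
  using smc unfolding smcat_def Let_def .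


lemmas A0 = A[THEN conjunct1, rule_format]
lemmas A1 = A[THEN conjunct2, THEN conjunct1]
lemmas A2 = A[THEN conjunct2, THEN conjunct2, THEN conjunct1]
lemmas A3 = A[THEN conjunct2, THEN conjunct2, THEN conjunct2, THEN conjunct1]
lemmas A4 = A[THEN conjunct2, THEN conjunct2, THEN conjunct2, THEN conjunct2, THEN conjunct1]
lemmas A5 = A[THEN conjunct2, THEN conjunct2, THEN conjunct2, THEN conjunct2, THEN conjunct2, THEN conjunct1]
lemmas A6 = A[THEN conjunct2, THEN conjunct2, THEN conjunct2, THEN conjunct2, THEN conjunct2, THEN conjunct2, THEN conjunct1]
lemmas A7 = A[THEN conjunct2, THEN conjunct2, THEN conjunct2, THEN conjunct2, THEN conjunct2, THEN conjunct2, THEN conjunct2, THEN conjunct1]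
lemmas A8 = A[THEN conjunct2, THEN conjunct2, THEN conjunct2, THEN conjunct2, THEN conjunct2, THEN conjunct2, THEN conjunct2, THEN conjunct2, THEN conjunct1]
lemmas A9 = A[THEN conjunct2, THEN conjunct2, THEN conjunct2, THEN conjunct2, THEN conjunct2, THEN conjunct2, THEN conjunct2, THEN conjunct2, THEN conjunct2, THEN conjunct1]
lemmas A10 = A[THEN conjunct2, THEN conjunct2, THEN conjunct2, THEN conjunct2, THEN conjunct2, THEN conjunct2, THEN conjunct2, THEN conjunct2, THEN conjunct2, THEN conjunct2, THEN conjunct1]
lemmas A11 = A[THEN conjunct2, THEN conjunct2, THEN conjunct2, THEN conjunct2, THEN conjunct2, THEN conjunct2, THEN conjunct2, THEN conjunct2, THEN conjunct2, THEN conjunct2, THEN conjunct2, THEN conjunct1]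
lemmas A12 = A[THEN conjunct2, THEN conjunct2, THEN conjunct2, THEN conjunct2, THEN conjunct2, THEN conjunct2, THEN conjunct2, THEN conjunct2, THEN conjunct2, THEN conjunct2, THEN conjunct2, THEN conjunct2, THEN conjunct1]
lemmas A13 = A[THEN conjunct2, THEN conjunct2, THEN conjunct2, THEN conjunct2, THEN conjunct2, THEN conjunct2, THEN conjunct2, THEN conjunct2, THEN conjunct2, THEN conjunct2, THEN conjunct2, THEN conjunct2, THEN conjunct2, THEN conjunct1]
lemmas A14 = A[THEN conjunct2, THEN conjunct2, THEN conjunct2, THEN conjunct2, THEN conjunct2, THEN conjunct2, THEN conjunct2, THEN conjunct2, THEN conjunct2, THEN conjunct2, THEN conjunct2, THEN conjunct2, THEN conjunct2, THEN conjunct2, THEN conjunct1]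
lemmas A15 = A[THEN conjunct2, THEN conjunct2, THEN conjunct2, THEN conjunct2, THEN conjunct2, THEN conjunct2, THEN conjunct2, THEN conjunct2, THEN conjunct2, THEN conjunct2, THEN conjunct2, THEN conjunct2, THEN conjunct2, THEN conjunct2, THEN conjunct2, THEN conjunct1]
lemmas A16 = A[THEN conjunct2, THEN conjunct2, THEN conjunct2, THEN conjunct2, THEN conjunct2, THEN conjunct2, THEN conjunct2, THEN conjunct2, THEN conjunct2, THEN conjunct2, THEN conjunct2, THEN conjunct2, THEN conjunct2, THEN conjunct2, THEN conjunct2, THEN conjunct2, THEN conjunct1]
lemmas A17 = A[THEN conjunct2, THEN conjunct2, THEN conjunct2, THEN conjunct2, THEN conjunct2, THEN conjunct2, THEN conjunct2, THEN conjunct2, THEN conjunct2, THEN conjunct2, THEN conjunct2, THEN conjunct2, THEN conjunct2, THEN conjunct2, THEN conjunct2, THEN conjunct2, THEN conjunct2]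

lemma add_H: "f \<in> Hm a b \<Longrightarrow> g \<in> Hm a b \<Longrightarrow> f \<oplus> g \<in> Hm a b" using A0[of a b, THEN conjunct2, THEN conjunct1] by blast
lemma sm_H: "f \<in> Hm a b \<Longrightarrow> sm c f \<in> Hm a b" using A0[of a b, THEN conjunct2, THEN conjunct2, THEN conjunct1] by blast
lemma add_assoc: "f \<in> Hm a b \<Longrightarrow> g \<in> Hm a b \<Longrightarrow> h \<in> Hm a b \<Longrightarrow> (f \<oplus> g) \<oplus> h = f \<oplus> (g \<oplus> h)" using A0[of a b, THEN conjunct2, THEN conjunct2, THEN conjunct2, THEN conjunct1] by blast
lemma add_comm: "f \<in> Hm a b \<Longrightarrow> g \<in> Hm a b \<Longrightarrow> f \<oplus> g = g \<oplus> f" using A0[of a b, THEN conjunct2, THEN conjunct2, THEN conjunct2, THEN conjunct2, THEN conjunct1] by blast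
lemma zr_add: "f \<in> Hm a b \<Longrightarrow> zr a b \<oplus> f = f" using A0[of a b, THEN conjunct2, THEN conjunct2, THEN conjunct2, THEN conjunct2, THEN conjunct2, THEN conjunct1] by blast
lemma add_neg: "f \<in> Hm a b \<Longrightarrow> f \<oplus> sm (-1) f = zr a b" using A0[of a b, THEN conjunct2, THEN conjunct2, THEN conjunct2, THEN conjunct2, THEN conjunct2, THEN conjunct2, THEN conjunct1] by blast
lemma sm_one: "f \<in> Hm a b \<Longrightarrow> sm 1 f = f" using A0[of a b, THEN conjunct2, THEN conjunct2, THEN conjunct2, THEN conjunct2, THEN conjunct2, THEN conjunct2, THEN conjunct2, THEN conjunct1] by blast
lemma sm_sm: "f \<in> Hm a b \<Longrightarrow> sm c (sm d f) = sm (c*d) f" using A0[of a b, THEN conjunct2, THEN conjunct2, THEN conjunct2, THEN conjunct2, THEN conjunct2, THEN conjunct2, THEN conjunct2, THEN conjunct2, THEN conjunct1] by blast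
lemma sm_add: "f \<in> Hm a b \<Longrightarrow> g \<in> Hm a b \<Longrightarrow> sm c (f \<oplus> g) = sm c f \<oplus> sm c g" using A0[of a b, THEN conjunct2, THEN conjunct2, THEN conjunct2, THEN conjunct2, THEN conjunct2, THEN conjunct2, THEN conjunct2, THEN conjunct2, THEN conjunct2, THEN conjunct2, THEN conjunct1] by blast
lemma Pr_H: "f \<in> Pr p a b \<Longrightarrow> f \<in> Hm a b" using A0[of a b, THEN conjunct2, THEN conjunct2, THEN conjunct2, THEN conjunct2, THEN conjunct2, THEN conjunct2, THEN conjunct2, THEN conjunct2, THEN conjunct2, THEN conjunct2, THEN conjunct2, THEN conjunct1] by blast
lemma zr_Pr: "zr a b \<in> Pr p a b" using A0[of a b, THEN conjunct2, THEN conjunct2, THEN conjunct2, THEN conjunct2, THEN conjunct2, THEN conjunct2, THEN conjunct2, THEN conjunct2, THEN conjunct2, THEN conjunct2, THEN conjunct2, THEN conjunct1] by blast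
lemma add_Pr: "f \<in> Pr p a b \<Longrightarrow> g \<in> Pr p a b \<Longrightarrow> f \<oplus> g \<in> Pr p a b" using A0[of a b, THEN conjunct2, THEN conjunct2, THEN conjunct2, THEN conjunct2, THEN conjunct2, THEN conjunct2, THEN conjunct2, THEN conjunct2, THEN conjunct2, THEN conjunct2, THEN conjunct2, THEN conjunct1] by blast
lemma sm_Pr: "f \<in> Pr p a b \<Longrightarrow> sm c f \<in> Pr p a b" using A0[of a b, THEN conjunct2, THEN conjunct2, THEN conjunct2, THEN conjunct2, THEN conjunct2, THEN conjunct2, THEN conjunct2, THEN conjunct2, THEN conjunct2, THEN conjunct2, THEN conjunct2, THEN conjunct1] by blast

lemma id_Pr: "idm a \<in> Pr False a a" using A1 by blast
lemma cm_Pr: "f \<in> Pr p a b \<Longrightarrow> g \<in> Pr q b c \<Longrightarrow> g \<odot> f \<in> Pr (p \<noteq> q) a c" using A3 by blast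
lemma cm_assoc: "f \<in> Hm a b \<Longrightarrow> g \<in> Hm b c \<Longrightarrow> h \<in> Hm c d \<Longrightarrow> h \<odot> (g \<odot> f) = (h \<odot> g) \<odot> f" using A4 by blast
lemma id_cm: "f \<in> Hm a b \<Longrightarrow> idm b \<odot> f = f" using A5 by blast
lemma cm_id: "f \<in> Hm a b \<Longrightarrow> f \<odot> idm a = f" using A5 by blast
lemma cm_add_r: "f \<in> Hm a b \<Longrightarrow> f' \<in> Hm a b \<Longrightarrow> g \<in> Hm b c \<Longrightarrow> g \<odot> (f \<oplus> f') = (g \<odot> f) \<oplus> (g \<odot> f')" using A6 by blast
lemma cm_add_l: "f \<in> Hm a b \<Longrightarrow> g \<in> Hm b c \<Longrightarrow> g' \<in> Hm b c \<Longrightarrow> (g \<oplus> g') \<odot> f = (g \<odot> f) \<oplus> (g' \<odot> f)" using A7 by blast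
lemma cm_sm_r: "f \<in> Hm a b \<Longrightarrow> g \<in> Hm b c \<Longrightarrow> g \<odot> (sm k f) = sm k (g \<odot> f)" using A8 by blast
lemma cm_sm_l: "f \<in> Hm a b \<Longrightarrow> g \<in> Hm b c \<Longrightarrow> (sm k g) \<odot> f = sm k (g \<odot> f)" using A8 by blast
lemma tn_Pr: "f \<in> Pr p a b \<Longrightarrow> g \<in> Pr q c d \<Longrightarrow> f \<otimes> g \<in> Pr (p \<noteq> q) (a @ c) (b @ d)" using A10 by blast
lemma tn_assoc: "f \<in> Hm a b \<Longrightarrow> g \<in> Hm c d \<Longrightarrow> k \<in> Hm e h \<Longrightarrow> (f \<otimes> g) \<otimes> k = f \<otimes> (g \<otimes> k)" using A11 by blast
lemma tn_unit_l: "f \<in> Hm a b \<Longrightarrow> idm [] \<otimes> f = f" using A12 by blast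
lemma tn_unit_r: "f \<in> Hm a b \<Longrightarrow> f \<otimes> idm [] = f" using A12 by blast
lemma tn_id_id: "idm a \<otimes> idm b = idm (a @ b)" using A13 by blast
lemma tn_add_l: "f \<in> Hm a b \<Longrightarrow> f' \<in> Hm a b \<Longrightarrow> g \<in> Hm c d \<Longrightarrow> (f \<oplus> f') \<otimes> g = (f \<otimes> g) \<oplus> (f' \<otimes> g)" using A14 by blast
lemma tn_add_r: "f \<in> Hm a b \<Longrightarrow> g \<in> Hm c d \<Longrightarrow> g' \<in> Hm c d \<Longrightarrow> f \<otimes> (g \<oplus> g') = (f \<otimes> g) \<oplus> (f \<otimes> g')" using A15 by blast
lemma tn_sm_l: "f \<in> Hm a b \<Longrightarrow> g \<in> Hm c d \<Longrightarrow> (sm k f) \<otimes> g = sm k (f \<otimes> g)" using A16 by blast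
lemma tn_sm_r: "f \<in> Hm a b \<Longrightarrow> g \<in> Hm c d \<Longrightarrow> f \<otimes> (sm k g) = sm k (f \<otimes> g)" using A16 by blast
lemma ic: "f \<in> Pr p a b \<Longrightarrow> g \<in> Pr q c d \<Longrightarrow> f' \<in> Pr p' b a' \<Longrightarrow> g' \<in> Pr q' d d' \<Longrightarrow>
   (f' \<otimes> g') \<odot> (f \<otimes> g) = sm (if q' \<and> p then -1 else 1) ((f' \<odot> f) \<otimes> (g' \<odot> g))" using A17 by blast

lemmas RR = rl[unfolded th_rel_def Let_def]
lemmas r_sg = RR[THEN conjunct1]
lemmas r_et = RR[THEN conjunct2, THEN conjunct1]
lemmas r_ep = RR[THEN conjunct2, THEN conjunct2, THEN conjunct1]
lemmas r_et2 = RR[THEN conjunct2, THEN conjunct2, THEN conjunct2, THEN conjunct1]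
lemmas r_ep2 = RR[THEN conjunct2, THEN conjunct2, THEN conjunct2, THEN conjunct2, THEN conjunct1]
lemmas r_cp = RR[THEN conjunct2, THEN conjunct2, THEN conjunct2, THEN conjunct2, THEN conjunct2, THEN conjunct1]
lemmas r_cq = RR[THEN conjunct2, THEN conjunct2, THEN conjunct2, THEN conjunct2, THEN conjunct2, THEN conjunct2, THEN conjunct1]
lemmas Z1 = RR[THEN conjunct2, THEN conjunct2, THEN conjunct2, THEN conjunct2, THEN conjunct2, THEN conjunct2, THEN conjunct2, THEN conjunct1]
lemmas Z2 = RR[THEN conjunct2, THEN conjunct2, THEN conjunct2, THEN conjunct2, THEN conjunct2, THEN conjunct2, THEN conjunct2, THEN conjunct2, THEN conjunct1]
lemmas Z3 = RR[THEN conjunct2, THEN conjunct2, THEN conjunct2, THEN conjunct2, THEN conjunct2, THEN conjunct2, THEN conjunct2, THEN conjunct2, THEN conjunct2, THEN conjunct1]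
lemmas Z4 = RR[THEN conjunct2, THEN conjunct2, THEN conjunct2, THEN conjunct2, THEN conjunct2, THEN conjunct2, THEN conjunct2, THEN conjunct2, THEN conjunct2, THEN conjunct2, THEN conjunct1]
lemmas ROT = RR[THEN conjunct2, THEN conjunct2, THEN conjunct2, THEN conjunct2, THEN conjunct2, THEN conjunct2, THEN conjunct2, THEN conjunct2, THEN conjunct2, THEN conjunct2, THEN conjunct2, THEN conjunct1]
lemmas S2 = RR[THEN conjunct2, THEN conjunct2, THEN conjunct2, THEN conjunct2, THEN conjunct2, THEN conjunct2, THEN conjunct2, THEN conjunct2, THEN conjunct2, THEN conjunct2, THEN conjunct2, THEN conjunct2, THEN conjunct1]
lemmas BR = RR[THEN conjunct2, THEN conjunct2, THEN conjunct2, THEN conjunct2, THEN conjunct2, THEN conjunct2, THEN conjunct2, THEN conjunct2, THEN conjunct2, THEN conjunct2, THEN conjunct2, THEN conjunct2, THEN conjunct2, THEN conjunct1]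
lemmas SSd = RR[THEN conjunct2, THEN conjunct2, THEN conjunct2, THEN conjunct2, THEN conjunct2, THEN conjunct2, THEN conjunct2, THEN conjunct2, THEN conjunct2, THEN conjunct2, THEN conjunct2, THEN conjunct2, THEN conjunct2, THEN conjunct2, THEN conjunct1]
lemmas SdS = RR[THEN conjunct2, THEN conjunct2, THEN conjunct2, THEN conjunct2, THEN conjunct2, THEN conjunct2, THEN conjunct2, THEN conjunct2, THEN conjunct2, THEN conjunct2, THEN conjunct2, THEN conjunct2, THEN conjunct2, THEN conjunct2, THEN conjunct2, THEN conjunct1]
lemmas EE = RR[THEN conjunct2, THEN conjunct2, THEN conjunct2, THEN conjunct2, THEN conjunct2, THEN conjunct2, THEN conjunct2, THEN conjunct2, THEN conjunct2, THEN conjunct2, THEN conjunct2, THEN conjunct2, THEN conjunct2, THEN conjunct2, THEN conjunct2, THEN conjunct2, THEN conjunct1]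
lemmas CURL0 = RR[THEN conjunct2, THEN conjunct2, THEN conjunct2, THEN conjunct2, THEN conjunct2, THEN conjunct2, THEN conjunct2, THEN conjunct2, THEN conjunct2, THEN conjunct2, THEN conjunct2, THEN conjunct2, THEN conjunct2, THEN conjunct2, THEN conjunct2, THEN conjunct2, THEN conjunct2, THEN conjunct1]
lemmas D1 = RR[THEN conjunct2, THEN conjunct2, THEN conjunct2, THEN conjunct2, THEN conjunct2, THEN conjunct2, THEN conjunct2, THEN conjunct2, THEN conjunct2, THEN conjunct2, THEN conjunct2, THEN conjunct2, THEN conjunct2, THEN conjunct2, THEN conjunct2, THEN conjunct2, THEN conjunct2, THEN conjunct2, THEN conjunct1]
lemmas D2 = RR[THEN conjunct2, THEN conjunct2, THEN conjunct2, THEN conjunct2, THEN conjunct2, THEN conjunct2, THEN conjunct2, THEN conjunct2, THEN conjunct2, THEN conjunct2, THEN conjunct2, THEN conjunct2, THEN conjunct2, THEN conjunct2, THEN conjunct2, THEN conjunct2, THEN conjunct2, THEN conjunct2, THEN conjunct2, THEN conjunct1]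
lemmas D3 = RR[THEN conjunct2, THEN conjunct2, THEN conjunct2, THEN conjunct2, THEN conjunct2, THEN conjunct2, THEN conjunct2, THEN conjunct2, THEN conjunct2, THEN conjunct2, THEN conjunct2, THEN conjunct2, THEN conjunct2, THEN conjunct2, THEN conjunct2, THEN conjunct2, THEN conjunct2, THEN conjunct2, THEN conjunct2, THEN conjunct2, THEN conjunct1]
lemmas D4 = RR[THEN conjunct2, THEN conjunct2, THEN conjunct2, THEN conjunct2, THEN conjunct2, THEN conjunct2, THEN conjunct2, THEN conjunct2, THEN conjunct2, THEN conjunct2, THEN conjunct2, THEN conjunct2, THEN conjunct2, THEN conjunct2, THEN conjunct2, THEN conjunct2, THEN conjunct2, THEN conjunct2, THEN conjunct2, THEN conjunct2, THEN conjunct2, THEN conjunct1]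
lemmas D5 = RR[THEN conjunct2, THEN conjunct2, THEN conjunct2, THEN conjunct2, THEN conjunct2, THEN conjunct2, THEN conjunct2, THEN conjunct2, THEN conjunct2, THEN conjunct2, THEN conjunct2, THEN conjunct2, THEN conjunct2, THEN conjunct2, THEN conjunct2, THEN conjunct2, THEN conjunct2, THEN conjunct2, THEN conjunct2, THEN conjunct2, THEN conjunct2, THEN conjunct2, THEN conjunct1]
lemmas D6 = RR[THEN conjunct2, THEN conjunct2, THEN conjunct2, THEN conjunct2, THEN conjunct2, THEN conjunct2, THEN conjunct2, THEN conjunct2, THEN conjunct2, THEN conjunct2, THEN conjunct2, THEN conjunct2, THEN conjunct2, THEN conjunct2, THEN conjunct2, THEN conjunct2, THEN conjunct2, THEN conjunct2, THEN conjunct2, THEN conjunct2, THEN conjunct2, THEN conjunct2, THEN conjunct2, THEN conjunct1]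
lemmas CC = RR[THEN conjunct2, THEN conjunct2, THEN conjunct2, THEN conjunct2, THEN conjunct2, THEN conjunct2, THEN conjunct2, THEN conjunct2, THEN conjunct2, THEN conjunct2, THEN conjunct2, THEN conjunct2, THEN conjunct2, THEN conjunct2, THEN conjunct2, THEN conjunct2, THEN conjunct2, THEN conjunct2, THEN conjunct2, THEN conjunct2, THEN conjunct2, THEN conjunct2, THEN conjunct2, THEN conjunct2, THEN conjunct1]
lemmas QQ = RR[THEN conjunct2, THEN conjunct2, THEN conjunct2, THEN conjunct2, THEN conjunct2, THEN conjunct2, THEN conjunct2, THEN conjunct2, THEN conjunct2, THEN conjunct2, THEN conjunct2, THEN conjunct2, THEN conjunct2, THEN conjunct2, THEN conjunct2, THEN conjunct2, THEN conjunct2, THEN conjunct2, THEN conjunct2, THEN conjunct2, THEN conjunct2, THEN conjunct2, THEN conjunct2, THEN conjunct2, THEN conjunct2, THEN conjunct1]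
lemmas BUB = RR[THEN conjunct2, THEN conjunct2, THEN conjunct2, THEN conjunct2, THEN conjunct2, THEN conjunct2, THEN conjunct2, THEN conjunct2, THEN conjunct2, THEN conjunct2, THEN conjunct2, THEN conjunct2, THEN conjunct2, THEN conjunct2, THEN conjunct2, THEN conjunct2, THEN conjunct2, THEN conjunct2, THEN conjunct2, THEN conjunct2, THEN conjunct2, THEN conjunct2, THEN conjunct2, THEN conjunct2, THEN conjunct2, THEN conjunct2]

abbreviation sg where "sg \<equiv> g_s G"
abbreviation et where "et \<equiv> g_eta G"
abbreviation ep where "ep \<equiv> g_eps G"
abbreviation et2 where "et2 \<equiv> g_eta2 G"
abbreviation ep2 where "ep2 \<equiv> g_eps2 G"
abbreviation cp where "cp \<equiv> g_cP G"
abbreviation cq where "cq \<equiv> g_cQ G"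
abbreviation xx where "xx \<equiv> th_X C G"
abbreviation sig where "sig \<equiv> th_sigma C G"
abbreviation sigd where "sigd \<equiv> th_sigma' C G"

lemma ty_id: "r = False \<Longrightarrow> x = a \<Longrightarrow> y = a \<Longrightarrow> idm a \<in> Pr r x y"
  using id_Pr by simp
lemma ty_cm: "f \<in> Pr p a b \<Longrightarrow> g \<in> Pr q b' c \<Longrightarrow> b' = b \<Longrightarrow> r = (p \<noteq> q) \<Longrightarrow> x = a \<Longrightarrow> y = c \<Longrightarrow> g \<odot> f \<in> Pr r x y"
  using cm_Pr by simp
lemma ty_tn: "f \<in> Pr p a b \<Longrightarrow> g \<in> Pr q c d \<Longrightarrow> r = (p \<noteq> q) \<Longrightarrow> x = a @ c \<Longrightarrow> y = b @ d \<Longrightarrow> f \<otimes> g \<in> Pr r x y"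
  using tn_Pr by simp
lemma ty_ad: "f \<in> Pr p a b \<Longrightarrow> g \<in> Pr p' a' b' \<Longrightarrow> p' = p \<Longrightarrow> a' = a \<Longrightarrow> b' = b \<Longrightarrow> r = p \<Longrightarrow> x = a \<Longrightarrow> y = b \<Longrightarrow> f \<oplus> g \<in> Pr r x y"
  using add_Pr by simp
lemma ty_sm: "f \<in> Pr p a b \<Longrightarrow> r = p \<Longrightarrow> x = a \<Longrightarrow> y = b \<Longrightarrow> sm c f \<in> Pr r x y"
  using sm_Pr by simp
lemma ty_sg: "r = False \<Longrightarrow> x = [Pob,Pob] \<Longrightarrow> y = [Pob,Pob] \<Longrightarrow> sg \<in> Pr r x y" using r_sg by simp
lemma ty_et: "r = False \<Longrightarrow> x = [] \<Longrightarrow> y = [Qob,Pob] \<Longrightarrow> et \<in> Pr r x y" using r_et by simp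
lemma ty_ep: "r = False \<Longrightarrow> x = [Qob,Pob] \<Longrightarrow> y = [] \<Longrightarrow> ep \<in> Pr r x y" using r_ep by simp
lemma ty_et2: "r = False \<Longrightarrow> x = [] \<Longrightarrow> y = [Pob,Qob] \<Longrightarrow> et2 \<in> Pr r x y" using r_et2 by simp
lemma ty_ep2: "r = False \<Longrightarrow> x = [Pob,Qob] \<Longrightarrow> y = [] \<Longrightarrow> ep2 \<in> Pr r x y" using r_ep2 by simp
lemma ty_cp: "r = True \<Longrightarrow> x = [Pob] \<Longrightarrow> y = [Pob] \<Longrightarrow> cp \<in> Pr r x y" using r_cp by simp
lemma ty_cq: "r = True \<Longrightarrow> x = [Qob] \<Longrightarrow> y = [Qob] \<Longrightarrow> cq \<in> Pr r x y" using r_cq by simp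

lemmas TY0 = Pr_H ty_id ty_cm ty_tn ty_ad ty_sm ty_sg ty_et ty_ep ty_et2 ty_ep2 ty_cp ty_cq refl

lemma ty_xx: "r = False \<Longrightarrow> x = [Pob] \<Longrightarrow> y = [Pob] \<Longrightarrow> xx \<in> Pr r x y"
  unfolding th_X_def by (rule TY0 | simp | assumption)+
lemma ty_sig: "r = False \<Longrightarrow> x = [Qob,Pob] \<Longrightarrow> y = [Pob,Qob] \<Longrightarrow> sig \<in> Pr r x y"
  unfolding th_sigma_def by (rule TY0 | simp | assumption)+
lemma ty_sigd: "r = False \<Longrightarrow> x = [Pob,Qob] \<Longrightarrow> y = [Qob,Pob] \<Longrightarrow> sigd \<in> Pr r x y"
  unfolding th_sigma'_def by (rule TY0 | simp | assumption)+

lemmas TY = TY0 ty_xx ty_sig ty_sigd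

lemma test1: "(sg \<otimes> idm [Qob]) \<odot> (idm [Pob] \<otimes> et2) \<in> Hm [Pob] [Pob,Pob,Qob]"
  by (rule TY | simp | assumption)+


lemma G_cmA: "f \<in> Pr p a b \<Longrightarrow> g \<in> Pr q b c \<Longrightarrow> h \<in> Pr r c d \<Longrightarrow> h \<odot> (g \<odot> f) = (h \<odot> g) \<odot> f"
  by (meson cm_assoc Pr_H)
lemma G_idL: "f \<in> Pr p a b \<Longrightarrow> idm b \<odot> f = f" by (meson id_cm Pr_H)
lemma G_idR: "f \<in> Pr p a b \<Longrightarrow> f \<odot> idm a = f" by (meson cm_id Pr_H)
lemma G_tnA: "f \<in> Pr p a b \<Longrightarrow> g \<in> Pr q c d \<Longrightarrow> k \<in> Pr r e h \<Longrightarrow> (f \<otimes> g) \<otimes> k = f \<otimes> (g \<otimes> k)"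
  by (meson tn_assoc Pr_H)
lemma G_uL: "f \<in> Pr p a b \<Longrightarrow> idm [] \<otimes> f = f" by (meson tn_unit_l Pr_H)
lemma G_uR: "f \<in> Pr p a b \<Longrightarrow> f \<otimes> idm [] = f" by (meson tn_unit_r Pr_H)

lemma G_ic0: assumes "f \<in> Pr p a b" "g \<in> Pr q c d" "f' \<in> Pr p' b a'" "g' \<in> Pr q' d d'" "\<not>(q' \<and> p)"
  shows "(f' \<otimes> g') \<odot> (f \<otimes> g) = (f' \<odot> f) \<otimes> (g' \<odot> g)"
proof -
  have "(f' \<odot> f) \<otimes> (g' \<odot> g) \<in> Hm (a@c) (a'@d')" 
    apply (rule TY)
    apply (rule TY)
    apply (rule TY)
    apply (rule assms)
    apply (rule assms)
    apply (rule TY)+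
    apply (rule assms)
    apply (rule assms)
    apply (rule TY | simp)+
    done
  then show ?thesis using ic[OF assms(1-4)] sm_one assms(5) by simp
qed

lemma G_ic1: assumes "f \<in> Pr p a b" "g \<in> Pr q c d" "f' \<in> Pr p' b a'" "g' \<in> Pr q' d d'" "q'" "p"
  shows "(f' \<otimes> g') \<odot> (f \<otimes> g) = sm (-1) ((f' \<odot> f) \<otimes> (g' \<odot> g))"
  using ic[OF assms(1-4)] assms(5,6) by simp
lemma G_cmtnR: assumes "f \<in> Pr p a b" "g \<in> Pr q b c" shows "(g \<odot> f) \<otimes> idm d = (g \<otimes> idm d) \<odot> (f \<otimes> idm d)"
proof -
  have "(g \<otimes> idm d) \<odot> (f \<otimes> idm d) = (g \<odot> f) \<otimes> (idm d \<odot> idm d)"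
    apply (rule G_ic0)
    apply (rule TY assms | simp)+
    done
  also have "idm d \<odot> idm d = idm d" by (rule G_idL; (rule TY | simp)+)
  finally show ?thesis by simp
qed

lemma G_cmtnL: assumes "f \<in> Pr p a b" "g \<in> Pr q b c" shows "idm d \<otimes> (g \<odot> f) = (idm d \<otimes> g) \<odot> (idm d \<otimes> f)"
proof -
  have "(idm d \<otimes> g) \<odot> (idm d \<otimes> f) = (idm d \<odot> idm d) \<otimes> (g \<odot> f)"
    by (rule G_ic0, (rule TY assms | simp)+)
  also have "idm d \<odot> idm d = idm d" by (rule G_idL, (rule TY | simp)+)
  finally show ?thesis by simp
qed
lemma G_spl1: assumes "f \<in> Pr p a b" "g \<in> Pr q c d" shows "f \<otimes> g = (f \<otimes> idm d) \<odot> (idm a \<otimes> g)"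
proof -
  have "(f \<otimes> idm d) \<odot> (idm a \<otimes> g) = (f \<odot> idm a) \<otimes> (idm d \<odot> g)"
    by (rule G_ic0, (rule TY assms | simp)+)
  also have "f \<odot> idm a = f" by (rule G_idR, (rule TY assms | simp)+)
  also have "idm d \<odot> g = g" by (rule G_idL, (rule TY assms | simp)+)
  finally show ?thesis by simp
qed
lemma G_spl2: assumes "f \<in> Pr p a b" "g \<in> Pr q c d" "\<not>(p \<and> q)" shows "f \<otimes> g = (idm b \<otimes> g) \<odot> (f \<otimes> idm c)"
proof -
  have "(idm b \<otimes> g) \<odot> (f \<otimes> idm c) = (idm b \<odot> f) \<otimes> (g \<odot> idm c)"
    by (rule G_ic0[OF assms(1) _ _ assms(2)], (rule TY | simp)+, use assms(3) in auto)
  also have "idm b \<odot> f = f" by (rule G_idL, (rule TY assms | simp)+)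
  also have "g \<odot> idm c = g" by (rule G_idR, (rule TY assms | simp)+)
  finally show ?thesis by simp
qed
lemma G_spl2o: assumes "f \<in> Pr True a b" "g \<in> Pr True c d" shows "(idm b \<otimes> g) \<odot> (f \<otimes> idm c) = sm (-1) (f \<otimes> g)"
proof -
  have "(idm b \<otimes> g) \<odot> (f \<otimes> idm c) = sm (-1) ((idm b \<odot> f) \<otimes> (g \<odot> idm c))"
    by (rule G_ic1[OF assms(1) _ _ assms(2)], (rule TY | simp)+)
  also have "idm b \<odot> f = f" by (rule G_idL, (rule TY assms | simp)+)
  also have "g \<odot> idm c = g" by (rule G_idR, (rule TY assms | simp)+)
  finally show ?thesis by simp
qed

abbreviation iP where "iP \<equiv> idm [Pob]"
abbreviation iQ where "iQ \<equiv> idm [Qob]"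
abbreviation iPP where "iPP \<equiv> idm [Pob,Pob]"
abbreviation iPQ where "iPQ \<equiv> idm [Pob,Qob]"
abbreviation iQP where "iQP \<equiv> idm [Qob,Pob]"
abbreviation i0 where "i0 \<equiv> idm []"

lemma sigma_slide: "(iP \<otimes> sig) \<odot> (et2 \<otimes> iP) = (sg \<otimes> iQ) \<odot> (iP \<otimes> et2)"
proof -
  have s1: "iP \<otimes> sig = (iP\<otimes>(ep\<otimes>iPQ)) \<odot> ((iP\<otimes>((iQ\<otimes>sg)\<otimes>iQ)) \<odot> (iP\<otimes>(iQP\<otimes>et2)))"
    unfolding th_sigma_def
    apply (subst G_cmtnL, (rule TY | simp)+)
    apply (subst G_cmtnL, (rule TY | simp)+)
    done
  have s2: "iP\<otimes>(iQP\<otimes>et2) = idm [Pob,Qob,Pob] \<otimes> et2"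
  proof -
    have "iP\<otimes>(iQP\<otimes>et2) = (iP\<otimes>iQP)\<otimes>et2" by (rule G_tnA[symmetric], (rule TY | simp)+)
    then show ?thesis by (simp add: tn_id_id)
  qed
  have s3: "(idm [Pob,Qob,Pob] \<otimes> et2) \<odot> (et2 \<otimes> iP) = (et2 \<otimes> idm [Pob,Pob,Qob]) \<odot> (iP \<otimes> et2)"
  proof -
    have "(idm [Pob,Qob,Pob] \<otimes> et2) \<odot> ((et2 \<otimes> iP) \<otimes> i0) = (et2 \<otimes> iP) \<otimes> et2"
      by (rule G_spl2[symmetric], (rule TY | simp)+)
    moreover have "(et2 \<otimes> iP) \<otimes> i0 = et2 \<otimes> iP" by (rule G_uR, (rule TY | simp)+)
    moreover have "(et2 \<otimes> iP) \<otimes> et2 = et2 \<otimes> (iP \<otimes> et2)" by (rule G_tnA, (rule TY | simp)+)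
    moreover have "et2 \<otimes> (iP \<otimes> et2) = (et2 \<otimes> idm [Pob,Pob,Qob]) \<odot> (i0 \<otimes> (iP \<otimes> et2))"
      by (rule G_spl1, (rule TY | simp)+)
    moreover have "i0 \<otimes> (iP \<otimes> et2) = iP \<otimes> et2" by (rule G_uL, (rule TY | simp)+)
    ultimately show ?thesis by simp
  qed
  have s4: "(iP\<otimes>((iQ\<otimes>sg)\<otimes>iQ)) \<odot> (et2 \<otimes> idm [Pob,Pob,Qob]) = (et2 \<otimes> idm [Pob,Pob,Qob]) \<odot> (sg\<otimes>iQ)"
  proof -
    have "(iQ\<otimes>sg)\<otimes>iQ = iQ\<otimes>(sg\<otimes>iQ)" by (rule G_tnA, (rule TY | simp)+)
    moreover have "iP\<otimes>(iQ\<otimes>(sg\<otimes>iQ)) = (iP\<otimes>iQ)\<otimes>(sg\<otimes>iQ)" by (rule G_tnA[symmetric], (rule TY | simp)+)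
    moreover have "(iPQ\<otimes>(sg\<otimes>iQ)) \<odot> (et2 \<otimes> idm [Pob,Pob,Qob]) = et2 \<otimes> (sg\<otimes>iQ)"
      by (rule G_spl2[symmetric], (rule TY | simp)+)
    moreover have "et2 \<otimes> (sg\<otimes>iQ) = (et2 \<otimes> idm [Pob,Pob,Qob]) \<odot> (i0 \<otimes> (sg\<otimes>iQ))"
      by (rule G_spl1, (rule TY | simp)+)
    moreover have "i0 \<otimes> (sg\<otimes>iQ) = sg\<otimes>iQ" by (rule G_uL, (rule TY | simp)+)
    ultimately show ?thesis by (simp add: tn_id_id)
  qed
  have s5: "(iP\<otimes>(ep\<otimes>iPQ)) \<odot> (et2 \<otimes> idm [Pob,Pob,Qob]) = idm [Pob,Pob,Qob]"
  proof -
    have "iP\<otimes>(ep\<otimes>iPQ) = (iP\<otimes>ep)\<otimes>iPQ" by (rule G_tnA[symmetric], (rule TY | simp)+)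
    moreover have "(et2\<otimes>iP)\<otimes>iPQ = et2 \<otimes> (iP \<otimes> iPQ)" by (rule G_tnA, (rule TY | simp)+)
    moreover have "((iP\<otimes>ep)\<odot>(et2\<otimes>iP))\<otimes>iPQ = ((iP\<otimes>ep)\<otimes>iPQ) \<odot> ((et2\<otimes>iP)\<otimes>iPQ)"
      by (rule G_cmtnR, (rule TY | simp)+)
    ultimately show ?thesis using Z3 by (simp add: tn_id_id)
  qed
  let ?A1 = "iP\<otimes>(ep\<otimes>iPQ)" and ?A2 = "iP\<otimes>((iQ\<otimes>sg)\<otimes>iQ)" and ?E = "et2 \<otimes> idm [Pob,Pob,Qob]"
  have "(iP \<otimes> sig) \<odot> (et2 \<otimes> iP) = (?A1 \<odot> (?A2 \<odot> (idm [Pob,Qob,Pob] \<otimes> et2))) \<odot> (et2 \<otimes> iP)"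
    by (simp only: s1 s2)
  also have "\<dots> = ?A1 \<odot> (?A2 \<odot> ((idm [Pob,Qob,Pob] \<otimes> et2) \<odot> (et2 \<otimes> iP)))"
    apply (subst G_cmA[symmetric], (rule TY | simp)+)
    apply (subst G_cmA[symmetric], (rule TY | simp)+)
    done
  also have "\<dots> = ?A1 \<odot> (?A2 \<odot> (?E \<odot> (iP \<otimes> et2)))" by (simp only: s3)
  also have "\<dots> = ?A1 \<odot> ((?A2 \<odot> ?E) \<odot> (iP \<otimes> et2))" by (subst G_cmA, (rule TY | simp)+)
  also have "\<dots> = ?A1 \<odot> ((?E \<odot> (sg \<otimes> iQ)) \<odot> (iP \<otimes> et2))" by (simp only: s4)
  also have "\<dots> = (?A1 \<odot> ?E) \<odot> ((sg \<otimes> iQ) \<odot> (iP \<otimes> et2))"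
    apply (subst G_cmA[symmetric], (rule TY | simp)+)
    apply (subst G_cmA, (rule TY | simp)+)
    done
  also have "\<dots> = (sg \<otimes> iQ) \<odot> (iP \<otimes> et2)" by (simp only: s5, rule G_idL, (rule TY | simp)+)
  finally show ?thesis .
qed

lemma sigmad_slide: "(ep2 \<otimes> iP) \<odot> (iP \<otimes> sigd) = (iP \<otimes> ep2) \<odot> (sg \<otimes> iQ)"
proof -
  have s1: "iP \<otimes> sigd = (iP\<otimes>(iQP\<otimes>ep2)) \<odot> ((iP\<otimes>((iQ\<otimes>sg)\<otimes>iQ)) \<odot> (iP\<otimes>(et\<otimes>iPQ)))"
    unfolding th_sigma'_def
    apply (subst G_cmtnL, (rule TY | simp)+)
    apply (subst G_cmtnL, (rule TY | simp)+)
    done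
  have s2: "iP\<otimes>(iQP\<otimes>ep2) = idm [Pob,Qob,Pob] \<otimes> ep2"
  proof -
    have "iP\<otimes>(iQP\<otimes>ep2) = (iP\<otimes>iQP)\<otimes>ep2" by (rule G_tnA[symmetric], (rule TY | simp)+)
    then show ?thesis by (simp add: tn_id_id)
  qed
  have s3: "(ep2 \<otimes> iP) \<odot> (idm [Pob,Qob,Pob] \<otimes> ep2) = (iP \<otimes> ep2) \<odot> (ep2 \<otimes> idm [Pob,Pob,Qob])"
  proof -
    have "((ep2 \<otimes> iP) \<otimes> i0) \<odot> (idm [Pob,Qob,Pob] \<otimes> ep2) = (ep2 \<otimes> iP) \<otimes> ep2"
      by (rule G_spl1[symmetric], (rule TY | simp)+)
    moreover have "(ep2 \<otimes> iP) \<otimes> i0 = ep2 \<otimes> iP" by (rule G_uR, (rule TY | simp)+)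
    moreover have "(ep2 \<otimes> iP) \<otimes> ep2 = ep2 \<otimes> (iP \<otimes> ep2)" by (rule G_tnA, (rule TY | simp)+)
    moreover have "ep2 \<otimes> (iP \<otimes> ep2) = (i0 \<otimes> (iP \<otimes> ep2)) \<odot> (ep2 \<otimes> idm [Pob,Pob,Qob])"
      by (rule G_spl2, (rule TY | simp)+)
    moreover have "i0 \<otimes> (iP \<otimes> ep2) = iP \<otimes> ep2" by (rule G_uL, (rule TY | simp)+)
    ultimately show ?thesis by simp
  qed
  have s4: "(ep2 \<otimes> idm [Pob,Pob,Qob]) \<odot> (iP\<otimes>((iQ\<otimes>sg)\<otimes>iQ)) = (sg\<otimes>iQ) \<odot> (ep2 \<otimes> idm [Pob,Pob,Qob])"
  proof -
    have "(iQ\<otimes>sg)\<otimes>iQ = iQ\<otimes>(sg\<otimes>iQ)" by (rule G_tnA, (rule TY | simp)+)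
    moreover have "iP\<otimes>(iQ\<otimes>(sg\<otimes>iQ)) = (iP\<otimes>iQ)\<otimes>(sg\<otimes>iQ)" by (rule G_tnA[symmetric], (rule TY | simp)+)
    moreover have "(ep2 \<otimes> idm [Pob,Pob,Qob]) \<odot> (iPQ\<otimes>(sg\<otimes>iQ)) = ep2 \<otimes> (sg\<otimes>iQ)"
      by (rule G_spl1[symmetric], (rule TY | simp)+)
    moreover have "ep2 \<otimes> (sg\<otimes>iQ) = (i0 \<otimes> (sg\<otimes>iQ)) \<odot> (ep2 \<otimes> idm [Pob,Pob,Qob])"
      by (rule G_spl2, (rule TY | simp)+)
    moreover have "i0 \<otimes> (sg\<otimes>iQ) = sg\<otimes>iQ" by (rule G_uL, (rule TY | simp)+)
    ultimately show ?thesis by (simp add: tn_id_id)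
  qed
  have s5: "(ep2 \<otimes> idm [Pob,Pob,Qob]) \<odot> (iP\<otimes>(et\<otimes>iPQ)) = idm [Pob,Pob,Qob]"
  proof -
    have "iP\<otimes>(et\<otimes>iPQ) = (iP\<otimes>et)\<otimes>iPQ" by (rule G_tnA[symmetric], (rule TY | simp)+)
    moreover have "(ep2\<otimes>iP)\<otimes>iPQ = ep2 \<otimes> (iP \<otimes> iPQ)" by (rule G_tnA, (rule TY | simp)+)
    moreover have "((ep2\<otimes>iP)\<odot>(iP\<otimes>et))\<otimes>iPQ = ((ep2\<otimes>iP)\<otimes>iPQ) \<odot> ((iP\<otimes>et)\<otimes>iPQ)"
      by (rule G_cmtnR, (rule TY | simp)+)
    ultimately show ?thesis using Z2 by (simp add: tn_id_id)
  qed
  let ?B2 = "iP\<otimes>((iQ\<otimes>sg)\<otimes>iQ)" and ?B3 = "iP\<otimes>(et\<otimes>iPQ)" and ?E = "ep2 \<otimes> idm [Pob,Pob,Qob]"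
  have "(ep2 \<otimes> iP) \<odot> (iP \<otimes> sigd) = (ep2 \<otimes> iP) \<odot> ((idm [Pob,Qob,Pob] \<otimes> ep2) \<odot> (?B2 \<odot> ?B3))"
    by (simp only: s1 s2)
  also have "\<dots> = ((ep2 \<otimes> iP) \<odot> (idm [Pob,Qob,Pob] \<otimes> ep2)) \<odot> (?B2 \<odot> ?B3)"
    by (subst G_cmA, (rule TY | simp)+)
  also have "\<dots> = ((iP \<otimes> ep2) \<odot> ?E) \<odot> (?B2 \<odot> ?B3)" by (simp only: s3)
  also have "\<dots> = (iP \<otimes> ep2) \<odot> (?E \<odot> (?B2 \<odot> ?B3))"
    by (subst G_cmA[symmetric], (rule TY | simp)+)
  also have "\<dots> = (iP \<otimes> ep2) \<odot> ((?E \<odot> ?B2) \<odot> ?B3)"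
    by (subst (2) G_cmA, (rule TY | simp)+)
  also have "\<dots> = (iP \<otimes> ep2) \<odot> (((sg\<otimes>iQ) \<odot> ?E) \<odot> ?B3)" by (simp only: s4)
  also have "\<dots> = (iP \<otimes> ep2) \<odot> ((sg\<otimes>iQ) \<odot> (?E \<odot> ?B3))"
    by (subst G_cmA[symmetric], (rule TY | simp)+)
  also have "\<dots> = (iP \<otimes> ep2) \<odot> (sg \<otimes> iQ)" by (simp only: s5, subst G_idR, (rule TY | simp)+)
  finally show ?thesis .
qed

lemma lin1: assumes ha: "a \<in> Hm A B" and he: "e \<in> Hm A B" and hd: "d \<in> Hm A B"
  and hx: "x = (a \<oplus> sm (-1) e) \<oplus> sm (-1) d" shows "a = (x \<oplus> e) \<oplus> d"
proof -
  have ne: "sm (-1) e \<in> Hm A B" and nd: "sm (-1) d \<in> Hm A B" using he hd sm_H by auto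
  have z1: "sm (-1) d \<oplus> d = zr A B" using add_comm[OF nd hd] add_neg[OF hd] by simp
  have z2: "sm (-1) e \<oplus> e = zr A B" using add_comm[OF ne he] add_neg[OF he] by simp
  have x2: "x = a \<oplus> (sm (-1) e \<oplus> sm (-1) d)" using hx add_assoc ha ne nd by metis
  have "(x \<oplus> e) \<oplus> d = x \<oplus> (e \<oplus> d)" using add_assoc hx ha ne nd he hd add_H by metis
  also have "\<dots> = (a \<oplus> (sm (-1) e \<oplus> sm (-1) d)) \<oplus> (e \<oplus> d)" using x2 by simp
  also have "\<dots> = a \<oplus> ((sm (-1) e \<oplus> sm (-1) d) \<oplus> (e \<oplus> d))"
    using add_assoc ha ne nd he hd add_H by metis
  also have "(sm (-1) e \<oplus> sm (-1) d) \<oplus> (e \<oplus> d) = sm (-1) e \<oplus> (sm (-1) d \<oplus> (d \<oplus> e))"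
    using add_assoc add_comm ne nd he hd add_H by metis
  also have "sm (-1) d \<oplus> (d \<oplus> e) = e" using add_assoc[OF nd hd he] z1 zr_add[OF he] by simp
  also have "sm (-1) e \<oplus> e = zr A B" by (rule z2)
  also have "a \<oplus> zr A B = a" using add_comm[OF ha A0[of A B, THEN conjunct1]] zr_add[OF ha] by simp
  finally show ?thesis by simp
qed

abbreviation W0 where "W0 \<equiv> iP \<otimes> ep2"
abbreviation V0 where "V0 \<equiv> sg \<otimes> iQ"
abbreviation U0 where "U0 \<equiv> iP \<otimes> et2"
abbreviation Y where "Y \<equiv> V0 \<odot> U0"
abbreviation Wp where "Wp \<equiv> W0 \<otimes> iP"
abbreviation Yp where "Yp \<equiv> Y \<otimes> iP"
abbreviation DD where "DD \<equiv> (cq \<otimes> iP) \<odot> (et \<odot> (ep \<odot> (iQ \<otimes> cp)))"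

lemma xx_def': "xx = W0 \<odot> Y" unfolding th_X_def by simp

lemma IQP: "iQP = ((sigd \<odot> sig) \<oplus> (et \<odot> ep)) \<oplus> DD"
  by (rule lin1[OF _ _ _ SdS], (rule TY | simp)+)

lemma Yp_split: "Yp = (sg \<otimes> iQP) \<odot> (iP \<otimes> (et2 \<otimes> iP))"
proof -
  have "Yp = (V0 \<otimes> iP) \<odot> (U0 \<otimes> iP)" by (rule G_cmtnR, (rule TY | simp)+)
  moreover have "V0 \<otimes> iP = sg \<otimes> (iQ \<otimes> iP)" by (rule G_tnA, (rule TY | simp)+)
  moreover have "U0 \<otimes> iP = iP \<otimes> (et2 \<otimes> iP)" by (rule G_tnA, (rule TY | simp)+)
  ultimately show ?thesis by (simp add: tn_id_id)
qed

lemma Wp_eq: "Wp = iP \<otimes> (ep2 \<otimes> iP)" by (rule G_tnA, (rule TY | simp)+)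

lemma iPP_tn: "g \<in> Pr p a b \<Longrightarrow> iPP \<otimes> g = iP \<otimes> (iP \<otimes> g)"
proof -
  assume g: "g \<in> Pr p a b"
  have "(iP \<otimes> iP) \<otimes> g = iP \<otimes> (iP \<otimes> g)" by (rule G_tnA, (rule TY g | simp)+)
  then show ?thesis by (simp add: tn_id_id)
qed

lemma KL: "(iPP \<otimes> ep) \<odot> Yp = sg"
proof -
  have e1: "(iPP \<otimes> ep) \<odot> (sg \<otimes> iQP) = (sg \<otimes> i0) \<odot> (iPP \<otimes> ep)"
  proof -
    have "(iPP \<otimes> ep) \<odot> (sg \<otimes> iQP) = (iPP \<odot> sg) \<otimes> (ep \<odot> iQP)" by (rule G_ic0, (rule TY | simp)+)
    moreover have "iPP \<odot> sg = sg" by (rule G_idL, (rule TY | simp)+)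
    moreover have "ep \<odot> iQP = ep" by (rule G_idR, (rule TY | simp)+)
    moreover have "sg \<otimes> ep = (sg \<otimes> i0) \<odot> (iPP \<otimes> ep)" by (rule G_spl1, (rule TY | simp)+)
    ultimately show ?thesis by simp
  qed
  have e2: "(iPP \<otimes> ep) \<odot> (iP \<otimes> (et2 \<otimes> iP)) = iPP"
  proof -
    have "iPP \<otimes> ep = iP \<otimes> (iP \<otimes> ep)" by (rule iPP_tn, (rule TY | simp)+)
    moreover have "(iP \<otimes> (iP \<otimes> ep)) \<odot> (iP \<otimes> (et2 \<otimes> iP)) = iP \<otimes> ((iP \<otimes> ep) \<odot> (et2 \<otimes> iP))"
      by (rule G_cmtnL[symmetric], (rule TY | simp)+)
    ultimately show ?thesis using Z3 by (simp add: tn_id_id)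
  qed
  have "(iPP \<otimes> ep) \<odot> Yp = (iPP \<otimes> ep) \<odot> ((sg \<otimes> iQP) \<odot> (iP \<otimes> (et2 \<otimes> iP)))" by (simp only: Yp_split)
  also have "\<dots> = ((iPP \<otimes> ep) \<odot> (sg \<otimes> iQP)) \<odot> (iP \<otimes> (et2 \<otimes> iP))" by (subst G_cmA, (rule TY | simp)+)
  also have "\<dots> = (sg \<otimes> i0) \<odot> ((iPP \<otimes> ep) \<odot> (iP \<otimes> (et2 \<otimes> iP)))"
    by (simp only: e1, subst G_cmA[symmetric], (rule TY | simp)+)
  also have "\<dots> = sg" by (simp only: e2, subst G_idR, (rule TY | simp)+, rule G_uR, (rule TY | simp)+)
  finally show ?thesis .
qed

lemma KU: "Wp \<odot> (iPP \<otimes> et) = iPP"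
proof -
  have "iPP \<otimes> et = iP \<otimes> (iP \<otimes> et)" by (rule iPP_tn, (rule TY | simp)+)
  moreover have "(iP \<otimes> (ep2 \<otimes> iP)) \<odot> (iP \<otimes> (iP \<otimes> et)) = iP \<otimes> ((ep2 \<otimes> iP) \<odot> (iP \<otimes> et))"
    by (rule G_cmtnL[symmetric], (rule TY | simp)+)
  ultimately show ?thesis using Z2 Wp_eq by (simp add: tn_id_id)
qed

lemma "ep2 \<odot> (cp \<otimes> iQ) = ep2 \<odot> (iP \<otimes> cq)" by (rule D4)

lemma DUi_e2: "(ep2\<otimes>iP)\<odot>((iP\<otimes>cq)\<otimes>iP) = (ep2\<otimes>iP)\<odot>(cp\<otimes>iQP)"
  proof -
    have "(ep2\<otimes>iP)\<odot>((iP\<otimes>cq)\<otimes>iP) = (ep2\<odot>(iP\<otimes>cq))\<otimes>iP" by (rule G_cmtnR[symmetric], (rule TY | simp)+)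
    also have "\<dots> = (ep2\<odot>(cp\<otimes>iQ))\<otimes>iP" by (simp only: D4)
    also have "\<dots> = (ep2\<otimes>iP)\<odot>((cp\<otimes>iQ)\<otimes>iP)" by (rule G_cmtnR, (rule TY | simp)+)
    also have "(cp\<otimes>iQ)\<otimes>iP = cp \<otimes> (iQ \<otimes> iP)" by (rule G_tnA, (rule TY | simp)+)
    finally show ?thesis by (simp add: tn_id_id)
  qed

lemma DUi_e3: "(cp\<otimes>iQP)\<odot>(iP\<otimes>et) = (iP\<otimes>et)\<odot>(cp\<otimes>i0)"
  proof -
    have "(cp\<otimes>iQP)\<odot>(iP\<otimes>et) = (cp\<odot>iP)\<otimes>(iQP\<odot>et)" by (rule G_ic0, (rule TY | simp)+)
    also have "cp\<odot>iP = cp" by (rule G_idR, (rule TY | simp)+)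
    also have "iQP\<odot>et = et" by (rule G_idL, (rule TY | simp)+)
    also have "cp\<otimes>et = (iP\<otimes>et)\<odot>(cp\<otimes>i0)" by (rule G_spl2, (rule TY | simp)+)
    finally show ?thesis .
  qed

lemma DUi: "(ep2\<otimes>iP)\<odot>((iP\<otimes>(cq\<otimes>iP))\<odot>(iP\<otimes>et)) = cp"
proof -
  have e1: "iP\<otimes>(cq\<otimes>iP) = (iP\<otimes>cq)\<otimes>iP" by (rule G_tnA[symmetric], (rule TY | simp)+)
  have "(ep2\<otimes>iP)\<odot>((iP\<otimes>(cq\<otimes>iP))\<odot>(iP\<otimes>et)) = ((ep2\<otimes>iP)\<odot>((iP\<otimes>cq)\<otimes>iP))\<odot>(iP\<otimes>et)"
    by (simp only: e1, subst G_cmA, (rule TY | simp)+)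
  also have "\<dots> = (ep2\<otimes>iP)\<odot>((cp\<otimes>iQP)\<odot>(iP\<otimes>et))"
    by (simp only: DUi_e2, subst G_cmA[symmetric], (rule TY | simp)+)
  also have "\<dots> = ((ep2\<otimes>iP)\<odot>(iP\<otimes>et))\<odot>(cp\<otimes>i0)" 
    by (simp only: DUi_e3, subst G_cmA, (rule TY | simp)+)
  also have "\<dots> = iP \<odot> (cp\<otimes>i0)" by (simp only: Z2)
  also have "\<dots> = cp\<otimes>i0" by (rule G_idL, (rule TY | simp)+)
  also have "\<dots> = cp" by (rule G_uR, (rule TY | simp)+)
  finally show ?thesis .
qed

lemma DU: "Wp \<odot> ((iPP\<otimes>(cq\<otimes>iP)) \<odot> (iPP\<otimes>et)) = iP \<otimes> cp"
proof -
  have a1: "iPP\<otimes>(cq\<otimes>iP) = iP\<otimes>(iP\<otimes>(cq\<otimes>iP))" by (rule iPP_tn, (rule TY | simp)+)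
  have a2: "iPP\<otimes>et = iP\<otimes>(iP\<otimes>et)" by (rule iPP_tn, (rule TY | simp)+)
  have a3: "(iP\<otimes>(iP\<otimes>(cq\<otimes>iP))) \<odot> (iP\<otimes>(iP\<otimes>et)) = iP \<otimes> ((iP\<otimes>(cq\<otimes>iP)) \<odot> (iP\<otimes>et))"
    by (rule G_cmtnL[symmetric], (rule TY | simp)+)
  have a4: "(iP\<otimes>(ep2\<otimes>iP)) \<odot> (iP \<otimes> ((iP\<otimes>(cq\<otimes>iP)) \<odot> (iP\<otimes>et))) = iP \<otimes> ((ep2\<otimes>iP) \<odot> ((iP\<otimes>(cq\<otimes>iP)) \<odot> (iP\<otimes>et)))"
    by (rule G_cmtnL[symmetric], (rule TY | simp)+)
  show ?thesis by (simp only: a1 a2 a3 a4 Wp_eq DUi)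
qed

lemma DL: "(iPP\<otimes>ep) \<odot> ((iPP\<otimes>(iQ\<otimes>cp)) \<odot> Yp) = sg \<odot> (iP\<otimes>cp)"
proof -
  have e1: "iPP\<otimes>(iQ\<otimes>cp) = idm [Pob,Pob,Qob] \<otimes> cp"
  proof -
    have "iPP\<otimes>(iQ\<otimes>cp) = (iPP\<otimes>iQ)\<otimes>cp" by (rule G_tnA[symmetric], (rule TY | simp)+)
    also have "iPP\<otimes>iQ = idm [Pob,Pob,Qob]" by (simp add: tn_id_id)
    finally show ?thesis .
  qed
  have e2: "(idm [Pob,Pob,Qob] \<otimes> cp) \<odot> Yp = Yp \<odot> (iP \<otimes> cp)"
  proof -
    have "(idm [Pob,Pob,Qob] \<otimes> cp) \<odot> Yp = (idm [Pob,Pob,Qob] \<odot> Y) \<otimes> (cp \<odot> iP)" by (rule G_ic0, (rule TY | simp)+)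
    also have "idm [Pob,Pob,Qob] \<odot> Y = Y" by (rule G_idL, (rule TY | simp)+)
    also have "cp \<odot> iP = cp" by (rule G_idR, (rule TY | simp)+)
    also have "Y \<otimes> cp = Yp \<odot> (iP \<otimes> cp)" by (rule G_spl1, (rule TY | simp)+)
    finally show ?thesis .
  qed
  have "(iPP\<otimes>ep) \<odot> ((iPP\<otimes>(iQ\<otimes>cp)) \<odot> Yp) = (iPP\<otimes>ep) \<odot> (Yp \<odot> (iP \<otimes> cp))" by (simp only: e1 e2)
  also have "\<dots> = ((iPP\<otimes>ep) \<odot> Yp) \<odot> (iP \<otimes> cp)" by (rule G_cmA, (rule TY | simp)+)
  finally show ?thesis by (simp only: KL)
qed

lemma SL: "(iPP\<otimes>sig) \<odot> Yp = (sg\<otimes>iPQ) \<odot> (iP\<otimes>Y)"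
proof -
  have e1: "(iPP \<otimes> sig) \<odot> (sg \<otimes> iQP) = (sg \<otimes> iPQ) \<odot> (iPP \<otimes> sig)"
  proof -
    have "(iPP \<otimes> sig) \<odot> (sg \<otimes> iQP) = (iPP \<odot> sg) \<otimes> (sig \<odot> iQP)" by (rule G_ic0, (rule TY | simp)+)
    also have "iPP \<odot> sg = sg" by (rule G_idL, (rule TY | simp)+)
    also have "sig \<odot> iQP = sig" by (rule G_idR, (rule TY | simp)+)
    also have "sg \<otimes> sig = (sg \<otimes> iPQ) \<odot> (iPP \<otimes> sig)" by (rule G_spl1, (rule TY | simp)+)
    finally show ?thesis .
  qed
  have e2: "(iPP \<otimes> sig) \<odot> (iP \<otimes> (et2 \<otimes> iP)) = iP \<otimes> Y"
  proof -
    have a1: "iPP \<otimes> sig = iP \<otimes> (iP \<otimes> sig)" by (rule iPP_tn, (rule TY | simp)+)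
    have a2: "(iP \<otimes> (iP \<otimes> sig)) \<odot> (iP \<otimes> (et2 \<otimes> iP)) = iP \<otimes> ((iP \<otimes> sig) \<odot> (et2 \<otimes> iP))"
      by (rule G_cmtnL[symmetric], (rule TY | simp)+)
    show ?thesis by (simp only: a1 a2 sigma_slide)
  qed
  have "(iPP \<otimes> sig) \<odot> Yp = (iPP \<otimes> sig) \<odot> ((sg \<otimes> iQP) \<odot> (iP \<otimes> (et2 \<otimes> iP)))" by (simp only: Yp_split)
  also have "\<dots> = ((iPP \<otimes> sig) \<odot> (sg \<otimes> iQP)) \<odot> (iP \<otimes> (et2 \<otimes> iP))" by (rule G_cmA, (rule TY | simp)+)
  also have "\<dots> = ((sg \<otimes> iPQ) \<odot> (iPP \<otimes> sig)) \<odot> (iP \<otimes> (et2 \<otimes> iP))" by (simp only: e1)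
  also have "\<dots> = (sg \<otimes> iPQ) \<odot> ((iPP \<otimes> sig) \<odot> (iP \<otimes> (et2 \<otimes> iP)))" by (rule G_cmA[symmetric], (rule TY | simp)+)
  finally show ?thesis by (simp only: e2)
qed

lemma SU: "Wp \<odot> (iPP\<otimes>sigd) = iP \<otimes> (W0 \<odot> V0)"
proof -
  have a1: "iPP \<otimes> sigd = iP \<otimes> (iP \<otimes> sigd)" by (rule iPP_tn, (rule TY | simp)+)
  have a2: "(iP \<otimes> (ep2 \<otimes> iP)) \<odot> (iP \<otimes> (iP \<otimes> sigd)) = iP \<otimes> ((ep2 \<otimes> iP) \<odot> (iP \<otimes> sigd))"
    by (rule G_cmtnL[symmetric], (rule TY | simp)+)
  show ?thesis by (simp only: a1 a2 Wp_eq sigmad_slide)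
qed

lemma sand: assumes h: "h \<in> Pr p c d" and w: "w \<in> Pr p' b c" and x1: "x1 \<in> Pr q a' b" and x2: "x2 \<in> Pr q a' b"
  and x3: "x3 \<in> Pr q a' b" and k: "k \<in> Pr r a a'"
  shows "h \<odot> (w \<odot> (((x1 \<oplus> x2) \<oplus> x3) \<odot> k)) = ((h \<odot> (w \<odot> (x1 \<odot> k))) \<oplus> (h \<odot> (w \<odot> (x2 \<odot> k)))) \<oplus> (h \<odot> (w \<odot> (x3 \<odot> k)))"
proof -
  have "((x1 \<oplus> x2) \<oplus> x3) \<odot> k = ((x1 \<oplus> x2) \<odot> k) \<oplus> (x3 \<odot> k)" by (rule cm_add_l, (rule TY assms | simp)+)
  also have "(x1 \<oplus> x2) \<odot> k = (x1 \<odot> k) \<oplus> (x2 \<odot> k)" by (rule cm_add_l, (rule TY assms | simp)+)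
  also have "w \<odot> (((x1 \<odot> k) \<oplus> (x2 \<odot> k)) \<oplus> (x3 \<odot> k)) = (w \<odot> ((x1 \<odot> k) \<oplus> (x2 \<odot> k))) \<oplus> (w \<odot> (x3 \<odot> k))"
    by (rule cm_add_r, (rule TY assms | simp)+)
  also have "w \<odot> ((x1 \<odot> k) \<oplus> (x2 \<odot> k)) = (w \<odot> (x1 \<odot> k)) \<oplus> (w \<odot> (x2 \<odot> k))"
    by (rule cm_add_r, (rule TY assms | simp)+)
  also have "h \<odot> (((w \<odot> (x1 \<odot> k)) \<oplus> (w \<odot> (x2 \<odot> k))) \<oplus> (w \<odot> (x3 \<odot> k))) = (h \<odot> ((w \<odot> (x1 \<odot> k)) \<oplus> (w \<odot> (x2 \<odot> k)))) \<oplus> (h \<odot> (w \<odot> (x3 \<odot> k)))"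
    by (rule cm_add_r, (rule TY assms | simp)+)
  also have "h \<odot> ((w \<odot> (x1 \<odot> k)) \<oplus> (w \<odot> (x2 \<odot> k))) = (h \<odot> (w \<odot> (x1 \<odot> k))) \<oplus> (h \<odot> (w \<odot> (x2 \<odot> k)))"
    by (rule cm_add_r, (rule TY assms | simp)+)
  finally show ?thesis .
qed

lemma TE: "sg \<odot> (Wp \<odot> ((iPP\<otimes>(et\<odot>ep)) \<odot> Yp)) = iPP"
proof -
  have a1: "iPP\<otimes>(et\<odot>ep) = (iPP\<otimes>et)\<odot>(iPP\<otimes>ep)" by (rule G_cmtnL, (rule TY | simp)+)
  have "sg \<odot> (Wp \<odot> ((iPP\<otimes>(et\<odot>ep)) \<odot> Yp)) = sg \<odot> (Wp \<odot> ((iPP\<otimes>et) \<odot> ((iPP\<otimes>ep) \<odot> Yp)))"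
    by (simp only: a1, subst G_cmA[symmetric], (rule TY | simp)+)
  also have "\<dots> = sg \<odot> ((Wp \<odot> (iPP\<otimes>et)) \<odot> ((iPP\<otimes>ep) \<odot> Yp))"
    by (subst (2) G_cmA, (rule TY | simp)+)
  also have "\<dots> = sg \<odot> (iPP \<odot> sg)" by (simp only: KU KL)
  also have "\<dots> = iPP" by (simp only: G_idL[OF r_sg] S2)
  finally show ?thesis .
qed

lemma TD: "sg \<odot> (Wp \<odot> ((iPP\<otimes>DD) \<odot> Yp)) = (cp \<otimes> iP) \<odot> (iP \<otimes> cp)"
proof -
  let ?DA = "iPP\<otimes>(cq\<otimes>iP)" and ?DB = "iPP\<otimes>et" and ?DC = "iPP\<otimes>ep" and ?DE = "iPP\<otimes>(iQ\<otimes>cp)"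
  have a1: "iPP\<otimes>DD = ?DA \<odot> (?DB \<odot> (?DC \<odot> ?DE))"
    apply (subst G_cmtnL, (rule TY | simp)+)
    apply (subst G_cmtnL, (rule TY | simp)+)
    apply (subst G_cmtnL, (rule TY | simp)+)
    done
  have a2: "(?DA \<odot> (?DB \<odot> (?DC \<odot> ?DE))) \<odot> Yp = ?DA \<odot> (?DB \<odot> (?DC \<odot> (?DE \<odot> Yp)))"
  proof -
    have "(?DA \<odot> (?DB \<odot> (?DC \<odot> ?DE))) \<odot> Yp = ?DA \<odot> ((?DB \<odot> (?DC \<odot> ?DE)) \<odot> Yp)" by (rule G_cmA[symmetric], (rule TY | simp)+)
    also have "(?DB \<odot> (?DC \<odot> ?DE)) \<odot> Yp = ?DB \<odot> ((?DC \<odot> ?DE) \<odot> Yp)" by (rule G_cmA[symmetric], (rule TY | simp)+)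
    also have "(?DC \<odot> ?DE) \<odot> Yp = ?DC \<odot> (?DE \<odot> Yp)" by (rule G_cmA[symmetric], (rule TY | simp)+)
    finally show ?thesis .
  qed
  have a3: "Wp \<odot> (?DA \<odot> (?DB \<odot> (?DC \<odot> (?DE \<odot> Yp)))) = (Wp \<odot> (?DA \<odot> ?DB)) \<odot> (?DC \<odot> (?DE \<odot> Yp))"
  proof -
    have "?DA \<odot> (?DB \<odot> (?DC \<odot> (?DE \<odot> Yp))) = (?DA \<odot> ?DB) \<odot> (?DC \<odot> (?DE \<odot> Yp))" by (rule G_cmA, (rule TY | simp)+)
    moreover have "Wp \<odot> ((?DA \<odot> ?DB) \<odot> (?DC \<odot> (?DE \<odot> Yp))) = (Wp \<odot> (?DA \<odot> ?DB)) \<odot> (?DC \<odot> (?DE \<odot> Yp))" by (rule G_cmA, (rule TY | simp)+)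
    ultimately show ?thesis by simp
  qed
  have "sg \<odot> (Wp \<odot> ((iPP\<otimes>DD) \<odot> Yp)) = sg \<odot> ((iP \<otimes> cp) \<odot> (sg \<odot> (iP\<otimes>cp)))"
    by (simp only: a1 a2, simp only: a3, simp only: DU DL)
  also have "\<dots> = (sg \<odot> (iP \<otimes> cp)) \<odot> (sg \<odot> (iP\<otimes>cp))" by (rule G_cmA, (rule TY | simp)+)
  also have "\<dots> = ((cp \<otimes> iP) \<odot> sg) \<odot> (sg \<odot> (iP\<otimes>cp))" by (simp only: D2)
  also have "\<dots> = (cp \<otimes> iP) \<odot> (sg \<odot> (sg \<odot> (iP\<otimes>cp)))" by (rule G_cmA[symmetric], (rule TY | simp)+)
  also have "sg \<odot> (sg \<odot> (iP\<otimes>cp)) = (sg \<odot> sg) \<odot> (iP\<otimes>cp)" by (rule G_cmA, (rule TY | simp)+)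
  also have "\<dots> = iP\<otimes>cp" by (simp only: S2, rule G_idL, (rule TY | simp)+)
  finally show ?thesis .
qed

abbreviation AA where "AA \<equiv> (sg \<otimes> iP) \<otimes> iQ"
abbreviation BB where "BB \<equiv> (iP \<otimes> sg) \<otimes> iQ"
abbreviation E2 where "E2 \<equiv> iPP \<otimes> et2"
abbreviation F2 where "F2 \<equiv> iPP \<otimes> ep2"

lemma braid3: "AA \<odot> (BB \<odot> (AA \<odot> BB)) = BB \<odot> AA"
proof -
  let ?s1 = "sg \<otimes> iP" and ?s2 = "iP \<otimes> sg"
  have a1: "AA \<odot> (BB \<odot> (AA \<odot> BB)) = (?s1 \<odot> (?s2 \<odot> (?s1 \<odot> ?s2))) \<otimes> iQ"
    apply (subst G_cmtnR, (rule TY | simp)+)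
    apply (subst G_cmtnR, (rule TY | simp)+)
    apply (subst G_cmtnR, (rule TY | simp)+)
    done
  have a2: "?s1 \<odot> (?s2 \<odot> (?s1 \<odot> ?s2)) = ?s2 \<odot> ?s1"
  proof -
    have "?s1 \<odot> (?s2 \<odot> (?s1 \<odot> ?s2)) = ?s1 \<odot> ((?s2 \<odot> ?s1) \<odot> ?s2)" by (subst G_cmA, (rule TY | simp)+)
    also have "\<dots> = (?s1 \<odot> (?s2 \<odot> ?s1)) \<odot> ?s2" by (rule G_cmA, (rule TY | simp)+)
    also have "\<dots> = (?s2 \<odot> (?s1 \<odot> ?s2)) \<odot> ?s2" by (simp only: BR)
    also have "\<dots> = ?s2 \<odot> ((?s1 \<odot> ?s2) \<odot> ?s2)" by (rule G_cmA[symmetric], (rule TY | simp)+)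
    also have "(?s1 \<odot> ?s2) \<odot> ?s2 = ?s1 \<odot> (?s2 \<odot> ?s2)" by (rule G_cmA[symmetric], (rule TY | simp)+)
    also have "?s2 \<odot> ?s2 = iP \<otimes> (sg \<odot> sg)" by (rule G_cmtnL[symmetric], (rule TY | simp)+)
    also have "iP \<otimes> (sg \<odot> sg) = idm [Pob,Pob,Pob]" by (simp add: S2 tn_id_id)
    also have "?s1 \<odot> idm [Pob,Pob,Pob] = ?s1" by (rule G_idR, (rule TY | simp)+)
    finally show ?thesis .
  qed
  have a3: "(?s2 \<odot> ?s1) \<otimes> iQ = BB \<odot> AA" by (rule G_cmtnR, (rule TY | simp)+)
  show ?thesis by (simp only: a1 a2 a3)
qed

lemma f3: "sg \<odot> F2 = F2 \<odot> (sg \<otimes> iPQ)"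
proof -
  have "sg \<odot> F2 = (sg \<otimes> i0) \<odot> F2" by (subst G_uR, (rule TY | simp)+)
  also have "\<dots> = sg \<otimes> ep2" by (rule G_spl1[symmetric], (rule TY | simp)+)
  also have "\<dots> = F2 \<odot> (sg \<otimes> iPQ)" by (rule G_spl2, (rule TY | simp)+)
  finally show ?thesis .
qed

lemma f4: "E2 \<odot> sg = (sg \<otimes> iPQ) \<odot> E2"
proof -
  have "E2 \<odot> sg = E2 \<odot> (sg \<otimes> i0)" by (subst G_uR, (rule TY | simp)+)
  also have "\<dots> = sg \<otimes> et2" by (rule G_spl2[symmetric], (rule TY | simp)+)
  also have "\<dots> = (sg \<otimes> iPQ) \<odot> E2" by (rule G_spl1, (rule TY | simp)+)
  finally show ?thesis .
qed

lemma f5: "iP \<otimes> V0 = BB" by (rule G_tnA[symmetric], (rule TY | simp)+)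
lemma f6: "sg \<otimes> iPQ = AA"
proof -
  have "(sg \<otimes> iP) \<otimes> iQ = sg \<otimes> (iP \<otimes> iQ)" by (rule G_tnA, (rule TY | simp)+)
  then show ?thesis by (simp add: tn_id_id)
qed
lemma f1: "iP \<otimes> W0 = F2" by (rule iPP_tn[symmetric], (rule TY | simp)+)
lemma f2: "iP \<otimes> U0 = E2" by (rule iPP_tn[symmetric], (rule TY | simp)+)

lemma RHS1: "(iP \<otimes> xx) \<odot> sg = F2 \<odot> (BB \<odot> (AA \<odot> E2))"
proof -
  have "iP \<otimes> xx = (iP \<otimes> W0) \<odot> ((iP \<otimes> V0) \<odot> (iP \<otimes> U0))"
    unfolding xx_def'
    apply (subst G_cmtnL, (rule TY | simp)+)
    apply (subst G_cmtnL, (rule TY | simp)+)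
    done
  then have "(iP \<otimes> xx) \<odot> sg = (F2 \<odot> (BB \<odot> E2)) \<odot> sg" by (simp only: f1 f2 f5)
  also have "\<dots> = F2 \<odot> ((BB \<odot> E2) \<odot> sg)" by (rule G_cmA[symmetric], (rule TY | simp)+)
  also have "(BB \<odot> E2) \<odot> sg = BB \<odot> (E2 \<odot> sg)" by (rule G_cmA[symmetric], (rule TY | simp)+)
  also have "E2 \<odot> sg = AA \<odot> E2" by (simp only: f4 f6)
  finally show ?thesis .
qed

lemma TS: "sg \<odot> (Wp \<odot> ((iPP\<otimes>(sigd \<odot> sig)) \<odot> Yp)) = (iP \<otimes> xx) \<odot> sg"
proof -
  have a1: "iPP\<otimes>(sigd\<odot>sig) = (iPP\<otimes>sigd)\<odot>(iPP\<otimes>sig)" by (rule G_cmtnL, (rule TY | simp)+)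
  have "sg \<odot> (Wp \<odot> ((iPP\<otimes>(sigd\<odot>sig)) \<odot> Yp)) = sg \<odot> (Wp \<odot> ((iPP\<otimes>sigd) \<odot> ((iPP\<otimes>sig) \<odot> Yp)))"
    by (simp only: a1, subst G_cmA[symmetric], (rule TY | simp)+)
  also have "\<dots> = sg \<odot> ((Wp \<odot> (iPP\<otimes>sigd)) \<odot> ((iPP\<otimes>sig) \<odot> Yp))"
    by (subst (2) G_cmA, (rule TY | simp)+)
  also have "\<dots> = sg \<odot> ((iP \<otimes> (W0 \<odot> V0)) \<odot> ((sg\<otimes>iPQ) \<odot> (iP\<otimes>Y)))" by (simp only: SU SL)
  also have "iP \<otimes> (W0 \<odot> V0) = (iP \<otimes> W0) \<odot> (iP \<otimes> V0)" by (rule G_cmtnL, (rule TY | simp)+)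
  also have "iP \<otimes> Y = (iP \<otimes> V0) \<odot> (iP \<otimes> U0)" by (rule G_cmtnL, (rule TY | simp)+)
  also have "sg \<odot> (((iP \<otimes> W0) \<odot> (iP \<otimes> V0)) \<odot> ((sg\<otimes>iPQ) \<odot> ((iP \<otimes> V0) \<odot> (iP \<otimes> U0))))
           = sg \<odot> ((F2 \<odot> BB) \<odot> (AA \<odot> (BB \<odot> E2)))" by (simp only: f1 f2 f5 f6)
  also have "\<dots> = sg \<odot> (F2 \<odot> (BB \<odot> (AA \<odot> (BB \<odot> E2))))" by (subst G_cmA[symmetric], (rule TY | simp)+)
  also have "\<dots> = (sg \<odot> F2) \<odot> (BB \<odot> (AA \<odot> (BB \<odot> E2)))" by (rule G_cmA, (rule TY | simp)+)
  also have "\<dots> = (F2 \<odot> AA) \<odot> (BB \<odot> (AA \<odot> (BB \<odot> E2)))" by (simp only: f3 f6)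
  also have "\<dots> = F2 \<odot> (AA \<odot> (BB \<odot> (AA \<odot> (BB \<odot> E2))))" by (rule G_cmA[symmetric], (rule TY | simp)+)
  also have "BB \<odot> (AA \<odot> (BB \<odot> E2)) = (BB \<odot> (AA \<odot> BB)) \<odot> E2"
  proof -
    have "AA \<odot> (BB \<odot> E2) = (AA \<odot> BB) \<odot> E2" by (rule G_cmA, (rule TY | simp)+)
    moreover have "BB \<odot> ((AA \<odot> BB) \<odot> E2) = (BB \<odot> (AA \<odot> BB)) \<odot> E2" by (rule G_cmA, (rule TY | simp)+)
    ultimately show ?thesis by simp
  qed
  also have "AA \<odot> ((BB \<odot> (AA \<odot> BB)) \<odot> E2) = (AA \<odot> (BB \<odot> (AA \<odot> BB))) \<odot> E2" by (rule G_cmA, (rule TY | simp)+)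
  also have "\<dots> = (BB \<odot> AA) \<odot> E2" by (simp only: braid3)
  also have "\<dots> = BB \<odot> (AA \<odot> E2)" by (rule G_cmA[symmetric], (rule TY | simp)+)
  finally show ?thesis by (simp only: RHS1)
qed

lemma relB: "sg \<odot> (xx \<otimes> iP) = (((iP \<otimes> xx) \<odot> sg) \<oplus> iPP) \<oplus> ((cp \<otimes> iP) \<odot> (iP \<otimes> cp))"
proof -
  let ?S = "sigd \<odot> sig" and ?E = "et \<odot> ep"
  have a1: "xx \<otimes> iP = Wp \<odot> Yp" unfolding xx_def' by (rule G_cmtnR, (rule TY | simp)+)
  have a2: "Wp \<odot> Yp = Wp \<odot> ((iPP \<otimes> iQP) \<odot> Yp)"
  proof -
    have "(iPP \<otimes> iQP) \<odot> Yp = Yp" by (simp add: tn_id_id, rule G_idL, (rule TY | simp)+)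
    then show ?thesis by simp
  qed
  have a3: "iPP \<otimes> iQP = ((iPP \<otimes> ?S) \<oplus> (iPP \<otimes> ?E)) \<oplus> (iPP \<otimes> DD)"
  proof -
    have "iPP \<otimes> iQP = iPP \<otimes> ((?S \<oplus> ?E) \<oplus> DD)" by (subst IQP, rule refl)
    also have "\<dots> = (iPP \<otimes> (?S \<oplus> ?E)) \<oplus> (iPP \<otimes> DD)" by (rule tn_add_r, (rule TY | simp)+)
    also have "iPP \<otimes> (?S \<oplus> ?E) = (iPP \<otimes> ?S) \<oplus> (iPP \<otimes> ?E)" by (rule tn_add_r, (rule TY | simp)+)
    finally show ?thesis .
  qed
  have "sg \<odot> (xx \<otimes> iP) = sg \<odot> (Wp \<odot> ((((iPP \<otimes> ?S) \<oplus> (iPP \<otimes> ?E)) \<oplus> (iPP \<otimes> DD)) \<odot> Yp))"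
    by (simp only: a1 a2 a3)
  also have "\<dots> = ((sg \<odot> (Wp \<odot> ((iPP \<otimes> ?S) \<odot> Yp))) \<oplus> (sg \<odot> (Wp \<odot> ((iPP \<otimes> ?E) \<odot> Yp)))) \<oplus> (sg \<odot> (Wp \<odot> ((iPP \<otimes> DD) \<odot> Yp)))"
    by (rule sand, (rule TY | simp)+)
  also have "\<dots> = (((iP \<otimes> xx) \<odot> sg) \<oplus> iPP) \<oplus> ((cp \<otimes> iP) \<odot> (iP \<otimes> cp))" by (simp only: TS TE TD)
  finally show ?thesis .
qed

lemma smm: assumes "f \<in> Pr p a b" shows "sm (-1) (sm (-1) f) = f"
proof -
  have h: "f \<in> Hm a b" using assms Pr_H by blast
  show ?thesis by (simp add: sm_sm[OF h] sm_one[OF h])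
qed

lemma relA: "cp \<odot> xx = sm (-1) (xx \<odot> cp)"
proof -
  let ?K = "(iP \<otimes> cp) \<otimes> iQ" and ?Cq = "iPP \<otimes> cq"
  have b1: "U0 \<odot> cp = (cp \<otimes> iPQ) \<odot> U0"
  proof -
    have "U0 \<odot> cp = U0 \<odot> (cp \<otimes> i0)" by (subst G_uR, (rule TY | simp)+)
    also have "\<dots> = cp \<otimes> et2" by (rule G_spl2[symmetric], (rule TY | simp)+)
    also have "\<dots> = (cp \<otimes> iPQ) \<odot> U0" by (rule G_spl1, (rule TY | simp)+)
    finally show ?thesis .
  qed
  have cpPQ: "cp \<otimes> iPQ = (cp \<otimes> iP) \<otimes> iQ"
  proof -
    have "(cp \<otimes> iP) \<otimes> iQ = cp \<otimes> (iP \<otimes> iQ)" by (rule G_tnA, (rule TY | simp)+)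
    then show ?thesis by (simp add: tn_id_id)
  qed
  have b2: "V0 \<odot> (cp \<otimes> iPQ) = ?K \<odot> V0"
  proof -
    have "V0 \<odot> ((cp \<otimes> iP) \<otimes> iQ) = (sg \<odot> (cp \<otimes> iP)) \<otimes> iQ" by (rule G_cmtnR[symmetric], (rule TY | simp)+)
    also have "\<dots> = ((iP \<otimes> cp) \<odot> sg) \<otimes> iQ" by (simp only: D1)
    also have "\<dots> = ?K \<odot> V0" by (rule G_cmtnR, (rule TY | simp)+)
    finally show ?thesis by (simp only: cpPQ)
  qed
  have b3: "W0 \<odot> ?K = W0 \<odot> ?Cq"
  proof -
    have kq: "?K = iP \<otimes> (cp \<otimes> iQ)" by (rule G_tnA, (rule TY | simp)+)
    have "W0 \<odot> ?K = iP \<otimes> (ep2 \<odot> (cp \<otimes> iQ))" by (simp only: kq, rule G_cmtnL[symmetric], (rule TY | simp)+)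
    also have "\<dots> = iP \<otimes> (ep2 \<odot> (iP \<otimes> cq))" by (simp only: D4)
    also have "\<dots> = W0 \<odot> (iP \<otimes> (iP \<otimes> cq))" by (rule G_cmtnL, (rule TY | simp)+)
    also have "iP \<otimes> (iP \<otimes> cq) = ?Cq" by (rule iPP_tn[symmetric], (rule TY | simp)+)
    finally show ?thesis .
  qed
  have b4: "?Cq \<odot> V0 = V0 \<odot> ?Cq"
  proof -
    have "?Cq \<odot> V0 = (iPP \<odot> sg) \<otimes> (cq \<odot> iQ)" by (rule G_ic0, (rule TY | simp)+)
    also have "iPP \<odot> sg = sg" by (rule G_idL, (rule TY | simp)+)
    also have "cq \<odot> iQ = cq" by (rule G_idR, (rule TY | simp)+)
    also have "sg \<otimes> cq = V0 \<odot> ?Cq" by (rule G_spl1, (rule TY | simp)+)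
    finally show ?thesis .
  qed
  have b5: "?Cq \<odot> U0 = sm (-1) (?K \<odot> U0)"
  proof -
    have "sm (-1) ((cp \<otimes> iQ) \<odot> et2) = sm (-1) (sm (-1) ((iP \<otimes> cq) \<odot> et2))" by (simp only: D6)
    also have "\<dots> = (iP \<otimes> cq) \<odot> et2" by (rule smm, (rule TY | simp)+)
    finally have d6: "(iP \<otimes> cq) \<odot> et2 = sm (-1) ((cp \<otimes> iQ) \<odot> et2)" by (rule sym)
    have "?Cq \<odot> U0 = (iP \<otimes> (iP \<otimes> cq)) \<odot> U0" by (simp only: iPP_tn[OF r_cq])
    also have "\<dots> = iP \<otimes> ((iP \<otimes> cq) \<odot> et2)" by (rule G_cmtnL[symmetric], (rule TY | simp)+)
    also have "\<dots> = iP \<otimes> sm (-1) ((cp \<otimes> iQ) \<odot> et2)" by (simp only: d6)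
    also have "\<dots> = sm (-1) (iP \<otimes> ((cp \<otimes> iQ) \<odot> et2))" by (rule tn_sm_r, (rule TY | simp)+)
    also have "iP \<otimes> ((cp \<otimes> iQ) \<odot> et2) = (iP \<otimes> (cp \<otimes> iQ)) \<odot> U0" by (rule G_cmtnL, (rule TY | simp)+)
    also have "iP \<otimes> (cp \<otimes> iQ) = ?K" by (rule G_tnA[symmetric], (rule TY | simp)+)
    finally show ?thesis .
  qed
  have b6: "V0 \<odot> ?K = (cp \<otimes> iPQ) \<odot> V0"
  proof -
    have "V0 \<odot> ?K = (sg \<odot> (iP \<otimes> cp)) \<otimes> iQ" by (rule G_cmtnR[symmetric], (rule TY | simp)+)
    also have "\<dots> = ((cp \<otimes> iP) \<odot> sg) \<otimes> iQ" by (simp only: D2)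
    also have "\<dots> = ((cp \<otimes> iP) \<otimes> iQ) \<odot> V0" by (rule G_cmtnR, (rule TY | simp)+)
    finally show ?thesis by (simp only: cpPQ)
  qed
  have b7: "W0 \<odot> (cp \<otimes> iPQ) = cp \<odot> W0"
  proof -
    have "W0 \<odot> (cp \<otimes> iPQ) = (iP \<odot> cp) \<otimes> (ep2 \<odot> iPQ)" by (rule G_ic0, (rule TY | simp)+)
    also have "iP \<odot> cp = cp" by (rule G_idL, (rule TY | simp)+)
    also have "ep2 \<odot> iPQ = ep2" by (rule G_idR, (rule TY | simp)+)
    also have "cp \<otimes> ep2 = (cp \<otimes> i0) \<odot> W0" by (rule G_spl1, (rule TY | simp)+)
    also have "cp \<otimes> i0 = cp" by (rule G_uR, (rule TY | simp)+)
    finally show ?thesis .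
  qed
  have "xx \<odot> cp = W0 \<odot> (V0 \<odot> (U0 \<odot> cp))"
    unfolding xx_def' by (subst G_cmA[symmetric], (rule TY | simp)+, subst G_cmA[symmetric], (rule TY | simp)+)
  also have "\<dots> = W0 \<odot> (V0 \<odot> ((cp \<otimes> iPQ) \<odot> U0))" by (simp only: b1)
  also have "\<dots> = W0 \<odot> ((?K \<odot> V0) \<odot> U0)" by (subst G_cmA, (rule TY | simp)+, simp only: b2)
  also have "\<dots> = (W0 \<odot> ?K) \<odot> (V0 \<odot> U0)" by (subst G_cmA[symmetric], (rule TY | simp)+, rule G_cmA, (rule TY | simp)+)
  also have "\<dots> = (W0 \<odot> ?Cq) \<odot> (V0 \<odot> U0)" by (simp only: b3)
  also have "\<dots> = W0 \<odot> ((?Cq \<odot> V0) \<odot> U0)" by (subst G_cmA[symmetric], (rule TY | simp)+, subst (2) G_cmA, (rule TY | simp)+)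
  also have "\<dots> = W0 \<odot> (V0 \<odot> (?Cq \<odot> U0))" by (simp only: b4, subst G_cmA[symmetric], (rule TY | simp)+)
  also have "\<dots> = W0 \<odot> (V0 \<odot> sm (-1) (?K \<odot> U0))" by (simp only: b5)
  also have "\<dots> = sm (-1) (W0 \<odot> (V0 \<odot> (?K \<odot> U0)))"
    by (subst cm_sm_r, (rule TY | simp)+, subst cm_sm_r, (rule TY | simp)+)
  also have "W0 \<odot> (V0 \<odot> (?K \<odot> U0)) = W0 \<odot> ((cp \<otimes> iPQ) \<odot> (V0 \<odot> U0))"
    by (subst G_cmA, (rule TY | simp)+, simp only: b6, subst G_cmA[symmetric], (rule TY | simp)+)
  also have "\<dots> = cp \<odot> (W0 \<odot> (V0 \<odot> U0))" by (subst G_cmA, (rule TY | simp)+, simp only: b7, rule G_cmA[symmetric], (rule TY | simp)+)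
  finally have "xx \<odot> cp = sm (-1) (cp \<odot> xx)" by (simp only: xx_def')
  then have "sm (-1) (xx \<odot> cp) = sm (-1) (sm (-1) (cp \<odot> xx))" by simp
  also have "\<dots> = cp \<odot> xx" by (rule smm, (rule TY | simp)+)
  finally show ?thesis by (rule sym)
qed

lemma relB2: "(xx \<otimes> iP) \<odot> sg = ((sg \<odot> (iP \<otimes> xx)) \<oplus> iPP) \<oplus> sm (-1) ((cp \<otimes> iP) \<odot> (iP \<otimes> cp))"
proof -
  let ?L = "xx \<otimes> iP" and ?R = "iP \<otimes> xx" and ?Dc = "(cp \<otimes> iP) \<odot> (iP \<otimes> cp)"
  have "?L \<odot> sg = (sg \<odot> sg) \<odot> (?L \<odot> sg)" by (simp only: S2, rule G_idL[symmetric], (rule TY | simp)+)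
  also have "\<dots> = sg \<odot> ((sg \<odot> ?L) \<odot> sg)"
    by (subst G_cmA[symmetric], (rule TY | simp)+, subst (2) G_cmA, (rule TY | simp)+)
  also have "\<dots> = sg \<odot> (iPP \<odot> (((?R \<odot> sg \<oplus> iPP) \<oplus> ?Dc) \<odot> sg))"
    by (simp only: relB, subst G_idL, (rule TY | simp)+)
  also have "\<dots> = ((sg \<odot> (iPP \<odot> ((?R \<odot> sg) \<odot> sg))) \<oplus> (sg \<odot> (iPP \<odot> (iPP \<odot> sg)))) \<oplus> (sg \<odot> (iPP \<odot> (?Dc \<odot> sg)))"
    by (rule sand, (rule TY | simp)+)
  also have "sg \<odot> (iPP \<odot> ((?R \<odot> sg) \<odot> sg)) = sg \<odot> ?R"
  proof -
    have "(?R \<odot> sg) \<odot> sg = ?R \<odot> (sg \<odot> sg)" by (rule G_cmA[symmetric], (rule TY | simp)+)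
    also have "\<dots> = ?R" by (simp only: S2, rule G_idR, (rule TY | simp)+)
    finally have e: "(?R \<odot> sg) \<odot> sg = ?R" .
    show ?thesis by (simp only: e, subst G_idL, (rule TY | simp)+)
  qed
  also have "sg \<odot> (iPP \<odot> (iPP \<odot> sg)) = iPP"
  proof -
    have e: "iPP \<odot> (iPP \<odot> sg) = sg" by (subst G_idL, (rule TY | simp)+, rule G_idL, (rule TY | simp)+)
    show ?thesis by (simp only: e S2)
  qed
  also have "sg \<odot> (iPP \<odot> (?Dc \<odot> sg)) = sm (-1) ?Dc"
  proof -
    have "sg \<odot> (iPP \<odot> (?Dc \<odot> sg)) = sg \<odot> ((cp \<otimes> iP) \<odot> ((iP \<otimes> cp) \<odot> sg))"
      by (subst G_idL, (rule TY | simp)+, subst G_cmA[symmetric], (rule TY | simp)+)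
    also have "\<dots> = sg \<odot> ((cp \<otimes> iP) \<odot> (sg \<odot> (cp \<otimes> iP)))" by (simp only: D1)
    also have "\<dots> = (sg \<odot> (cp \<otimes> iP)) \<odot> (sg \<odot> (cp \<otimes> iP))" by (rule G_cmA, (rule TY | simp)+)
    also have "\<dots> = ((iP \<otimes> cp) \<odot> sg) \<odot> (sg \<odot> (cp \<otimes> iP))" by (simp only: D1)
    also have "\<dots> = (iP \<otimes> cp) \<odot> (sg \<odot> (sg \<odot> (cp \<otimes> iP)))" by (rule G_cmA[symmetric], (rule TY | simp)+)
    also have "sg \<odot> (sg \<odot> (cp \<otimes> iP)) = (sg \<odot> sg) \<odot> (cp \<otimes> iP)" by (rule G_cmA, (rule TY | simp)+)
    also have "\<dots> = cp \<otimes> iP" by (simp only: S2, rule G_idL, (rule TY | simp)+)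
    also have "(iP \<otimes> cp) \<odot> (cp \<otimes> iP) = sm (-1) (cp \<otimes> cp)" by (rule G_spl2o, (rule TY | simp)+)
    also have "cp \<otimes> cp = ?Dc" by (rule G_spl1, (rule TY | simp)+)
    finally show ?thesis .
  qed
  finally show ?thesis .
qed

abbreviation rp where "rp k \<equiv> replicate k True"
abbreviation emb where "emb k f m \<equiv> (idm (rp k) \<otimes> f) \<otimes> idm (rp m)"

lemma E1: assumes f: "f \<in> Pr p x y" and g: "g \<in> Pr q y z" shows "emb k g m \<odot> emb k f m = emb k (g \<odot> f) m"
proof -
  have "emb k g m \<odot> emb k f m = ((idm (rp k) \<otimes> g) \<odot> (idm (rp k) \<otimes> f)) \<otimes> idm (rp m)"
    by (rule G_cmtnR[symmetric], (rule TY f g | simp)+)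
  also have "(idm (rp k) \<otimes> g) \<odot> (idm (rp k) \<otimes> f) = idm (rp k) \<otimes> (g \<odot> f)"
    by (rule G_cmtnL[symmetric], (rule TY f g | simp)+)
  finally show ?thesis .
qed

lemma E2: assumes f: "f \<in> Pr p x y" shows "emb k (f \<otimes> idm (rp j)) m = emb k f (j+m)"
proof -
  have "idm (rp k) \<otimes> (f \<otimes> idm (rp j)) = (idm (rp k) \<otimes> f) \<otimes> idm (rp j)" by (rule G_tnA[symmetric], (rule TY f | simp)+)
  moreover have "((idm (rp k) \<otimes> f) \<otimes> idm (rp j)) \<otimes> idm (rp m) = (idm (rp k) \<otimes> f) \<otimes> (idm (rp j) \<otimes> idm (rp m))"
    by (rule G_tnA, (rule TY f | simp)+)
  moreover have "idm (rp j) \<otimes> idm (rp m) = idm (rp (j+m))" by (simp add: tn_id_id replicate_add)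
  ultimately show ?thesis by simp
qed

lemma E3: assumes f: "f \<in> Pr p x y" shows "emb k (idm (rp j) \<otimes> f) m = emb (k+j) f m"
proof -
  have "idm (rp k) \<otimes> (idm (rp j) \<otimes> f) = (idm (rp k) \<otimes> idm (rp j)) \<otimes> f" by (rule G_tnA[symmetric], (rule TY f | simp)+)
  moreover have "idm (rp k) \<otimes> idm (rp j) = idm (rp (k+j))" by (simp add: tn_id_id replicate_add)
  ultimately show ?thesis by simp
qed

lemma E4a: assumes f: "f \<in> Pr p x y" and g: "g \<in> Pr p x y" shows "emb k (f \<oplus> g) m = emb k f m \<oplus> emb k g m"
proof -
  have "idm (rp k) \<otimes> (f \<oplus> g) = (idm (rp k) \<otimes> f) \<oplus> (idm (rp k) \<otimes> g)" by (rule tn_add_r, (rule TY f g | simp)+)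
  moreover have "((idm (rp k) \<otimes> f) \<oplus> (idm (rp k) \<otimes> g)) \<otimes> idm (rp m) = emb k f m \<oplus> emb k g m"
    by (rule tn_add_l, (rule TY f g | simp)+)
  ultimately show ?thesis by simp
qed

lemma E4b: assumes f: "f \<in> Pr p x y" shows "emb k (sm c f) m = sm c (emb k f m)"
proof -
  have "idm (rp k) \<otimes> (sm c f) = sm c (idm (rp k) \<otimes> f)" by (rule tn_sm_r, (rule TY f | simp)+)
  moreover have "sm c (idm (rp k) \<otimes> f) \<otimes> idm (rp m) = sm c (emb k f m)" by (rule tn_sm_l, (rule TY f | simp)+)
  ultimately show ?thesis by simp
qed

lemma E6: "emb k (idm (rp a)) m = idm (rp (k+a+m))"
  by (simp add: tn_id_id replicate_add)

lemma E7: assumes f: "f \<in> Pr p (rp a) (rp a)" and g: "g \<in> Pr q (rp b) (rp b)"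
  shows "emb k f (j+b+m) \<odot> emb (k+a+j) g m = emb k (f \<otimes> (idm (rp j) \<otimes> g)) m"
    and "emb (k+a+j) g m \<odot> emb k f (j+b+m) = sm (if p \<and> q then -1 else 1) (emb k (f \<otimes> (idm (rp j) \<otimes> g)) m)"
proof -
  have a1: "emb k f (j+b+m) = emb k (f \<otimes> idm (rp (j+b))) m" by (subst E2, (rule TY f | simp)+)
  have a2: "emb (k+a+j) g m = emb k (idm (rp (a+j)) \<otimes> g) m" by (subst E3, (rule TY g | simp)+, simp add: add.assoc)
  have a3: "idm (rp (a+j)) \<otimes> g = idm (rp a) \<otimes> (idm (rp j) \<otimes> g)"
  proof -
    have "(idm (rp a) \<otimes> idm (rp j)) \<otimes> g = idm (rp a) \<otimes> (idm (rp j) \<otimes> g)" by (rule G_tnA, (rule TY g | simp)+)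
    then show ?thesis by (simp add: tn_id_id replicate_add)
  qed
  have a4: "(f \<otimes> idm (rp (j+b))) \<odot> (idm (rp a) \<otimes> (idm (rp j) \<otimes> g)) = f \<otimes> (idm (rp j) \<otimes> g)"
  proof -
    have "(f \<otimes> idm (rp (j+b))) \<odot> (idm (rp a) \<otimes> (idm (rp j) \<otimes> g)) = (f \<odot> idm (rp a)) \<otimes> (idm (rp (j+b)) \<odot> (idm (rp j) \<otimes> g))"
      by (rule G_ic0, (rule TY f g | simp add: replicate_add)+)
    also have "f \<odot> idm (rp a) = f" by (rule G_idR, rule f)
    also have "idm (rp (j+b)) \<odot> (idm (rp j) \<otimes> g) = idm (rp j) \<otimes> g" by (rule G_idL, (rule TY f g | simp add: replicate_add)+)
    finally show ?thesis .
  qed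
  have a5: "(idm (rp a) \<otimes> (idm (rp j) \<otimes> g)) \<odot> (f \<otimes> idm (rp (j+b))) = sm (if p \<and> q then -1 else 1) (f \<otimes> (idm (rp j) \<otimes> g))"
  proof -
    have "(idm (rp a) \<otimes> (idm (rp j) \<otimes> g)) \<odot> (f \<otimes> idm (rp (j+b))) = sm (if q \<and> p then -1 else 1) ((idm (rp a) \<odot> f) \<otimes> ((idm (rp j) \<otimes> g) \<odot> idm (rp (j+b))))"
      by (rule ic, (rule TY f g | simp add: replicate_add)+)
    also have "idm (rp a) \<odot> f = f" by (rule G_idL, rule f)
    also have "(idm (rp j) \<otimes> g) \<odot> idm (rp (j+b)) = idm (rp j) \<otimes> g" by (rule G_idR, (rule TY f g | simp add: replicate_add)+)
    finally show ?thesis by (simp add: conj_commute)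
  qed
  have e1: "emb k (f \<otimes> idm (rp (j+b))) m \<odot> emb k (idm (rp a) \<otimes> (idm (rp j) \<otimes> g)) m
      = emb k ((f \<otimes> idm (rp (j+b))) \<odot> (idm (rp a) \<otimes> (idm (rp j) \<otimes> g))) m"
    by (rule E1, (rule TY f g | simp add: replicate_add)+)
  have e2: "emb k (idm (rp a) \<otimes> (idm (rp j) \<otimes> g)) m \<odot> emb k (f \<otimes> idm (rp (j+b))) m
      = emb k ((idm (rp a) \<otimes> (idm (rp j) \<otimes> g)) \<odot> (f \<otimes> idm (rp (j+b)))) m"
    by (rule E1, (rule TY f g | simp add: replicate_add)+)
  show "emb k f (j+b+m) \<odot> emb (k+a+j) g m = emb k (f \<otimes> (idm (rp j) \<otimes> g)) m"
    by (simp only: a1 a2 a3 e1 a4)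
  have "emb (k+a+j) g m \<odot> emb k f (j+b+m) = emb k ((idm (rp a) \<otimes> (idm (rp j) \<otimes> g)) \<odot> (f \<otimes> idm (rp (j+b)))) m"
    by (simp only: a1 a2 a3 e2)
  also have "\<dots> = sm (if p \<and> q then -1 else 1) (emb k (f \<otimes> (idm (rp j) \<otimes> g)) m)"
    by (simp only: a5, rule E4b, (rule TY f g | simp add: replicate_add)+)
  finally show "emb (k+a+j) g m \<odot> emb k f (j+b+m) = sm (if p \<and> q then -1 else 1) (emb k (f \<otimes> (idm (rp j) \<otimes> g)) m)" .
qed

lemma Xsh: "th_Xi C G n i = emb (i-1) xx (n-i)" unfolding th_Xi_def by simp
lemma Csh: "th_C C G n i = emb (i-1) cp (n-i)" unfolding th_C_def by simp
lemma Tsh: "th_T C G n i = emb (i-1) sg (n-i-1)" unfolding th_T_def by simp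
lemma rp1: "idm (rp 1) = iP" by simp

lemma lift_r: assumes f: "f \<in> Pr p [True] [True]" shows "emb k (f \<otimes> iP) m = emb k f (Suc m)"
proof -
  have "emb k (f \<otimes> idm (rp 1)) m = emb k f (1+m)" by (rule E2, rule f)
  then show ?thesis by simp
qed
lemma lift_l: assumes f: "f \<in> Pr p [True] [True]" shows "emb k (iP \<otimes> f) m = emb (Suc k) f m"
proof -
  have "emb k (idm (rp 1) \<otimes> f) m = emb (k+1) f m" by (rule E3, rule f)
  then show ?thesis by simp
qed

lemma part12: assumes "1 \<le> i" "i \<le> n - 1" "2 \<le> n"
  shows "th_T C G n i \<odot> th_Xi C G n i = ((th_Xi C G n (i+1) \<odot> th_T C G n i) \<oplus> idm (rp n)) \<oplus> (th_C C G n i \<odot> th_C C G n (i+1))"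
    and "th_Xi C G n i \<odot> th_T C G n i = ((th_T C G n i \<odot> th_Xi C G n (i+1)) \<oplus> idm (rp n)) \<oplus> sm (-1) (th_C C G n i \<odot> th_C C G n (i+1))"
proof -
  define k where "k = i - 1"
  define m where "m = n - i - 1"
  have i1: "i - 1 = k" and i2: "n - i = Suc m" and i3: "(i+1) - 1 = Suc k" and i4: "n - (i+1) = m" and i5: "n - i - 1 = m"
    and i6: "n = k + 2 + m"
    using assms unfolding k_def m_def by arith+
  have hT: "th_T C G n i = emb k sg m" by (simp only: Tsh i1 i5)
  have hX: "th_Xi C G n i = emb k (xx \<otimes> iP) m" by (simp only: Xsh i1 i2, rule lift_r[symmetric], (rule TY | simp)+)
  have hX1: "th_Xi C G n (i+1) = emb k (iP \<otimes> xx) m" by (simp only: Xsh i3 i4, rule lift_l[symmetric], (rule TY | simp)+)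
  have hC: "th_C C G n i = emb k (cp \<otimes> iP) m" by (simp only: Csh i1 i2, rule lift_r[symmetric], (rule TY | simp)+)
  have hC1: "th_C C G n (i+1) = emb k (iP \<otimes> cp) m" by (simp only: Csh i3 i4, rule lift_l[symmetric], (rule TY | simp)+)
  have hI: "idm (rp n) = emb k iPP m"
  proof -
    have "emb k (idm (rp 2)) m = idm (rp (k+2+m))" by (rule E6)
    then show ?thesis by (simp add: i6 numeral_2_eq_2)
  qed
  let ?Dc = "(cp \<otimes> iP) \<odot> (iP \<otimes> cp)"
  have eD: "emb k ?Dc m = emb k (cp \<otimes> iP) m \<odot> emb k (iP \<otimes> cp) m" by (rule E1[symmetric], (rule TY | simp)+)
  have "emb k sg m \<odot> emb k (xx \<otimes> iP) m = emb k (sg \<odot> (xx \<otimes> iP)) m" by (rule E1, (rule TY | simp)+)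
  also have "\<dots> = emb k ((((iP \<otimes> xx) \<odot> sg) \<oplus> iPP) \<oplus> ?Dc) m" by (simp only: relB)
  also have "\<dots> = emb k (((iP \<otimes> xx) \<odot> sg) \<oplus> iPP) m \<oplus> emb k ?Dc m" by (rule E4a, (rule TY | simp)+)
  also have "emb k (((iP \<otimes> xx) \<odot> sg) \<oplus> iPP) m = emb k ((iP \<otimes> xx) \<odot> sg) m \<oplus> emb k iPP m" by (rule E4a, (rule TY | simp)+)
  also have "emb k ((iP \<otimes> xx) \<odot> sg) m = emb k (iP \<otimes> xx) m \<odot> emb k sg m" by (rule E1[symmetric], (rule TY | simp)+)
  finally show "th_T C G n i \<odot> th_Xi C G n i = ((th_Xi C G n (i+1) \<odot> th_T C G n i) \<oplus> idm (rp n)) \<oplus> (th_C C G n i \<odot> th_C C G n (i+1))"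
    by (simp only: hT hX hX1 hC hC1 hI eD)
  have "emb k (xx \<otimes> iP) m \<odot> emb k sg m = emb k ((xx \<otimes> iP) \<odot> sg) m" by (rule E1, (rule TY | simp)+)
  also have "\<dots> = emb k (((sg \<odot> (iP \<otimes> xx)) \<oplus> iPP) \<oplus> sm (-1) ?Dc) m" by (simp only: relB2)
  also have "\<dots> = emb k ((sg \<odot> (iP \<otimes> xx)) \<oplus> iPP) m \<oplus> emb k (sm (-1) ?Dc) m" by (rule E4a, (rule TY | simp)+)
  also have "emb k ((sg \<odot> (iP \<otimes> xx)) \<oplus> iPP) m = emb k (sg \<odot> (iP \<otimes> xx)) m \<oplus> emb k iPP m" by (rule E4a, (rule TY | simp)+)
  also have "emb k (sg \<odot> (iP \<otimes> xx)) m = emb k sg m \<odot> emb k (iP \<otimes> xx) m" by (rule E1[symmetric], (rule TY | simp)+)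
  also have "emb k (sm (-1) ?Dc) m = sm (-1) (emb k ?Dc m)" by (rule E4b, (rule TY | simp)+)
  finally show "th_Xi C G n i \<odot> th_T C G n i = ((th_T C G n i \<odot> th_Xi C G n (i+1)) \<oplus> idm (rp n)) \<oplus> sm (-1) (th_C C G n i \<odot> th_C C G n (i+1))"
    by (simp only: hT hX hX1 hC hC1 hI eD)
qed

lemma tyC1: "cp \<in> Pr True (rp 1) (rp 1)" using r_cp by simp
lemma tyX1: "xx \<in> Pr False (rp 1) (rp 1)" by (rule ty_xx, simp_all)

lemma part3: assumes "1 \<le> i" "i \<le> n" "1 \<le> j" "j \<le> n"
  shows "th_C C G n i \<odot> th_Xi C G n j = sm (if i = j then -1 else 1) (th_Xi C G n j \<odot> th_C C G n i)"
proof (cases "i = j")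
  case True
  have "emb (i-1) cp (n-i) \<odot> emb (i-1) xx (n-i) = emb (i-1) (cp \<odot> xx) (n-i)" by (rule E1, (rule TY | simp)+)
  also have "\<dots> = emb (i-1) (sm (-1) (xx \<odot> cp)) (n-i)" by (simp only: relA)
  also have "\<dots> = sm (-1) (emb (i-1) (xx \<odot> cp) (n-i))" by (rule E4b, (rule TY | simp)+)
  also have "emb (i-1) (xx \<odot> cp) (n-i) = emb (i-1) xx (n-i) \<odot> emb (i-1) cp (n-i)" by (rule E1[symmetric], (rule TY | simp)+)
  finally show ?thesis using True by (simp add: Csh Xsh)
next
  case False
  then have "i < j \<or> j < i" by arith
  then show ?thesis
  proof
    assume ij: "i < j"
    define a where "a = i - 1"
    define jj where "jj = j - i - 1"
    define mm where "mm = n - j"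
    have q1: "i - 1 = a" and q2: "n - i = jj + 1 + mm" and q3: "j - 1 = a + 1 + jj" and q4: "n - j = mm"
      using assms ij unfolding a_def jj_def mm_def by arith+
    have hC: "th_C C G n i = emb a cp (jj+1+mm)" by (simp only: Csh q1 q2)
    have hX: "th_Xi C G n j = emb (a+1+jj) xx mm" by (simp only: Xsh q3 q4)
    note e = E7[OF tyC1 tyX1, of a jj mm]
    let ?W = "emb a (cp \<otimes> (idm (rp jj) \<otimes> xx)) mm"
    have W: "?W \<in> Hm (rp a @ (rp 1 @ rp jj @ rp 1) @ rp mm) (rp a @ (rp 1 @ rp jj @ rp 1) @ rp mm)"
      by (rule TY | simp)+
    have "th_C C G n i \<odot> th_Xi C G n j = ?W" by (simp only: hC hX e(1))
    also have "\<dots> = sm 1 (sm 1 ?W)" by (simp add: sm_one[OF W])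
    also have "sm 1 ?W = th_Xi C G n j \<odot> th_C C G n i" by (simp only: hC hX e(2), simp)
    finally show ?thesis using False by simp
  next
    assume ji: "j < i"
    define a where "a = j - 1"
    define jj where "jj = i - j - 1"
    define mm where "mm = n - i"
    have q1: "j - 1 = a" and q2: "n - j = jj + 1 + mm" and q3: "i - 1 = a + 1 + jj" and q4: "n - i = mm"
      using assms ji unfolding a_def jj_def mm_def by arith+
    have hC: "th_C C G n i = emb (a+1+jj) cp mm" by (simp only: Csh q3 q4)
    have hX: "th_Xi C G n j = emb a xx (jj+1+mm)" by (simp only: Xsh q1 q2)
    note e = E7[OF tyX1 tyC1, of a jj mm]
    have "th_C C G n i \<odot> th_Xi C G n j = sm 1 (th_Xi C G n j \<odot> th_C C G n i)"
      by (simp only: hC hX e(1) e(2), simp)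
    then show ?thesis using False by simp
  qed
qed

lemma part4: assumes "1 \<le> i" "i \<le> n" "1 \<le> j" "j \<le> n"
  shows "th_Xi C G n i \<odot> th_Xi C G n j = th_Xi C G n j \<odot> th_Xi C G n i"
proof -
  have gen: "th_Xi C G n i \<odot> th_Xi C G n j = th_Xi C G n j \<odot> th_Xi C G n i" if ij: "i < j" and as: "1 \<le> i" "j \<le> n" for i j
  proof -
    define a where "a = i - 1"
    define jj where "jj = j - i - 1"
    define mm where "mm = n - j"
    have q1: "i - 1 = a" and q2: "n - i = jj + 1 + mm" and q3: "j - 1 = a + 1 + jj" and q4: "n - j = mm"
      using as ij unfolding a_def jj_def mm_def by arith+
    have hXi: "th_Xi C G n i = emb a xx (jj+1+mm)" by (simp only: Xsh q1 q2)
    have hXj: "th_Xi C G n j = emb (a+1+jj) xx mm" by (simp only: Xsh q3 q4)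
    note e = E7[OF tyX1 tyX1, of a jj mm]
    let ?W = "emb a (xx \<otimes> (idm (rp jj) \<otimes> xx)) mm"
    have W: "?W \<in> Hm (rp a @ (rp 1 @ rp jj @ rp 1) @ rp mm) (rp a @ (rp 1 @ rp jj @ rp 1) @ rp mm)"
      by (rule TY | simp)+
    have "th_Xi C G n i \<odot> th_Xi C G n j = ?W" by (simp only: hXi hXj e(1))
    also have "\<dots> = sm 1 ?W" by (simp add: sm_one[OF W])
    also have "\<dots> = th_Xi C G n j \<odot> th_Xi C G n i" by (simp only: hXi hXj e(2), simp)
    finally show ?thesis .
  qed
  show ?thesis
  proof (cases i j rule: linorder_cases)
    case less then show ?thesis using gen assms by blast
  next
    case equal then show ?thesis by simp
  next
    case greater then show ?thesis using gen[of j i] assms by simp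
  qed
qed
end

theorem proposition4:
  fixes C :: "('k::field_char_0, 'm) scat" and G :: "'m thgen" and n :: nat
  assumes "smcat C" and "th_rel C G" and "n \<ge> 2"
  shows "(\<forall>i. 1 \<le> i \<and> i \<le> n - 1 \<longrightarrow>
            sc_comp C (th_T C G n i) (th_Xi C G n i)
              = sc_add C (sc_add C (sc_comp C (th_Xi C G n (i + 1)) (th_T C G n i))
                                   (sc_id C (replicate n True)))
                         (sc_comp C (th_C C G n i) (th_C C G n (i + 1)))) \<and>
         (\<forall>i. 1 \<le> i \<and> i \<le> n - 1 \<longrightarrow>
            sc_comp C (th_Xi C G n i) (th_T C G n i)
              = sc_add C (sc_add C (sc_comp C (th_T C G n i) (th_Xi C G n (i + 1)))
                                   (sc_id C (replicate n True)))
                         (sc_smult C (-1) (sc_comp C (th_C C G n i) (th_C C G n (i + 1))))) \<and>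
         (\<forall>i j. 1 \<le> i \<and> i \<le> n \<and> 1 \<le> j \<and> j \<le> n \<longrightarrow>
            sc_comp C (th_C C G n i) (th_Xi C G n j)
              = sc_smult C (if i = j then -1 else 1) (sc_comp C (th_Xi C G n j) (th_C C G n i))) \<and>
         (\<forall>i j. 1 \<le> i \<and> i \<le> n \<and> 1 \<le> j \<and> j \<le> n \<longrightarrow>
            sc_comp C (th_Xi C G n i) (th_Xi C G n j) = sc_comp C (th_Xi C G n j) (th_Xi C G n i))"
proof -
  interpret TH C G using assms(1,2) by unfold_locales
  show ?thesis
  proof (intro conjI allI impI)
    fix i assume h: "1 \<le> i \<and> i \<le> n - 1"
    then show "sc_comp C (th_T C G n i) (th_Xi C G n i)
              = sc_add C (sc_add C (sc_comp C (th_Xi C G n (i + 1)) (th_T C G n i))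
                                   (sc_id C (replicate n True)))
                         (sc_comp C (th_C C G n i) (th_C C G n (i + 1)))"
      using part12(1)[of i n] assms(3) by blast
  next
    fix i assume h: "1 \<le> i \<and> i \<le> n - 1"
    then show "sc_comp C (th_Xi C G n i) (th_T C G n i)
              = sc_add C (sc_add C (sc_comp C (th_T C G n i) (th_Xi C G n (i + 1)))
                                   (sc_id C (replicate n True)))
                         (sc_smult C (-1) (sc_comp C (th_C C G n i) (th_C C G n (i + 1))))"
      using part12(2)[of i n] assms(3) by blast
  next
    fix i j assume h: "1 \<le> i \<and> i \<le> n \<and> 1 \<le> j \<and> j \<le> n"
    then show "sc_comp C (th_C C G n i) (th_Xi C G n j)
              = sc_smult C (if i = j then -1 else 1) (sc_comp C (th_Xi C G n j) (th_C C G n i))"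
      using part3[of i n j] by blast
  next
    fix i j assume h: "1 \<le> i \<and> i \<le> n \<and> 1 \<le> j \<and> j \<le> n"
    then show "sc_comp C (th_Xi C G n i) (th_Xi C G n j) = sc_comp C (th_Xi C G n j) (th_Xi C G n i)"
      using part4[of i n j] by blast
  qed
qed

end
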